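(* Let $T\in(0,\infty)$, let $X_0,X_1$ be Banach spaces with $X_1\hookrightarrow X_0$ densely and continuously, let $A\colon[0,T]\to\mathcal{L}(X_1,X_0)$ be strongly measurable in the strong operator topology, let $p\in(1,\infty)$, $\kappa\in[0,p-1)$, and suppose $A$ has maximal $L^p(0,T,w_\kappa)$-regularity. Then for any $0\le a<b\le T$ and $f\in L^p(a,b,w_\kappa;X_0)$ there exists a unique strong solution $u\in\mathrm{MR}^p(a,b,w_\kappa)$ of $u'+Au=f$ on $(a,b)$, $u(a)=0$, and \[\|u\|_{\mathrm{MR}^p(a,b,w_\kappa)}\le M_{p,\kappa,A}(0,T)\|f\|_{L^p(a,b,w_\kappa;X_0)}.\] In particular, $A$ has maximal $L^p(a,b,w_\kappa)$-regularity and $M_{p,\kappa,A}(a,b)\le M_{p,\kappa,A}(0,T)$.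
   Context: For $\mu\ge0$, $w_\mu(t)=|t|^\mu$ (never shifted, also on subintervals). $L^p(a,b,w_\kappa;X)$ is the space of strongly measurable $f\colon(a,b)\to X$ with $\int_a^bt^\kappa\|f(t)\|_X^pdt<\infty$, $W^{1,p}(a,b,w_\kappa;X)$ analogously, and $\mathrm{MR}^p(a,b,w_\kappa):=L^p(a,b,w_\kappa;X_1)\cap W^{1,p}(a,b,w_\kappa;X_0)$ with norm $\max\{\|u\|_{L^p(a,b,w_\kappa;X_1)},\|u\|_{W^{1,p}(a,b,w_\kappa;X_0)}\}$. A strong solution of $u'+Au=f$ on $(a,b)$, $u(a)=u_a$, is $u\in L^1(a,b;X_1)\cap W^{1,1}(a,b;X_0)$ with $Au\in L^1(a,b;X_0)$, $u(a)=u_a$ and $u'+Au=f$ a.e. on $(a,b)$. $A$ has maximal $L^p(a,b,w_\kappa)$-regularity if for every $f\in L^p(a,b,w_\kappa;X_0)$ there exists a unique strong solution $u\in\mathrm{MR}^p(a,b,w_\kappa)$ with $u(a)=0$, and there is a constant $C$ independent of $f$ such that for every $\tau\in(a,b]$ and every strong solution $v\in\mathrm{MR}^p(a,\tau,w_\kappa)$ of $v'+Av=f$ on $(a,\tau)$ with $v(a)=0$, $\|v\|_{\mathrm{MR}^p(a,\tau,w_\kappa)}\le C\|f\|_{L^p(a,\tau,w_\kappa;X_0)}$. The infimum of all such $C$ is $M_{p,\kappa,A}(a,b)$. *)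

theory Defs
  imports "HOL-Analysis.Analysis"
begin

definition strongly_measurable_on :: "real set \<Rightarrow> (real \<Rightarrow> 'x::real_normed_vector) \<Rightarrow> bool" where
  "strongly_measurable_on S f \<longleftrightarrow>
     (\<exists>s. (\<forall>n. simple_function lborel (s n)) \<and>
          (AE t in lborel. t \<in> S \<longrightarrow> (\<lambda>n. s n t) \<longlonglongrightarrow> f t))"

text \<open>Weight w_kappa(t) = |t| powr kappa (never shifted).\<close>
definition Lpw :: "real \<Rightarrow> real \<Rightarrow> real \<Rightarrow> real \<Rightarrow> (real \<Rightarrow> 'x::real_normed_vector) \<Rightarrow> bool" where
  "Lpw a b \<kappa> p f \<longleftrightarrow> strongly_measurable_on {a<..<b} f \<and>
     (\<integral>\<^sup>+ t \<in> {a<..<b}. ennreal (\<bar>t\<bar> powr \<kappa> * norm (f t) powr p) \<partial>lborel) < \<infinity>"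

definition Lpw_norm :: "real \<Rightarrow> real \<Rightarrow> real \<Rightarrow> real \<Rightarrow> (real \<Rightarrow> 'x::real_normed_vector) \<Rightarrow> real" where
  "Lpw_norm a b \<kappa> p f =
     (enn2real (\<integral>\<^sup>+ t \<in> {a<..<b}. ennreal (\<bar>t\<bar> powr \<kappa> * norm (f t) powr p) \<partial>lborel)) powr (1 / p)"

definition test_fun :: "real \<Rightarrow> real \<Rightarrow> (real \<Rightarrow> real) \<Rightarrow> bool" where
  "test_fun a b \<phi> \<longleftrightarrow> (\<forall>n x. ((deriv ^^ n) \<phi>) differentiable (at x)) \<and>
     (\<exists>c d. a < c \<and> c \<le> d \<and> d < b \<and> (\<forall>t. t \<notin> {c..d} \<longrightarrow> \<phi> t = 0))"

definition weak_deriv :: "real \<Rightarrow> real \<Rightarrow> (real \<Rightarrow> 'x::banach) \<Rightarrow> (real \<Rightarrow> 'x) \<Rightarrow> bool" where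
  "weak_deriv a b g g' \<longleftrightarrow> (\<forall>\<phi>. test_fun a b \<phi> \<longrightarrow> (\<exists>I.
      ((\<lambda>t. deriv \<phi> t *\<^sub>R g t) has_integral - I) {a<..<b} \<and>
      ((\<lambda>t. \<phi> t *\<^sub>R g' t) has_integral I) {a<..<b}))"

definition W1pw :: "real \<Rightarrow> real \<Rightarrow> real \<Rightarrow> real \<Rightarrow> (real \<Rightarrow> 'x::banach) \<Rightarrow> bool" where
  "W1pw a b \<kappa> p g \<longleftrightarrow> Lpw a b \<kappa> p g \<and> (\<exists>g'. weak_deriv a b g g' \<and> Lpw a b \<kappa> p g')"

definition W1pw_norm :: "real \<Rightarrow> real \<Rightarrow> real \<Rightarrow> real \<Rightarrow> (real \<Rightarrow> 'x::banach) \<Rightarrow> real" where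
  "W1pw_norm a b \<kappa> p g =
     (Lpw_norm a b \<kappa> p g powr p
      + Lpw_norm a b \<kappa> p (SOME g'. weak_deriv a b g g' \<and> Lpw a b \<kappa> p g') powr p) powr (1 / p)"

text \<open>X_1 is modelled as a Banach space 'x1 embedded into X_0 = 'x0 by J.\<close>
definition MR :: "('x1::banach \<Rightarrow>\<^sub>L 'x0::banach) \<Rightarrow> real \<Rightarrow> real \<Rightarrow> real \<Rightarrow> real \<Rightarrow> (real \<Rightarrow> 'x1) \<Rightarrow> bool" where
  "MR J p \<kappa> a b u \<longleftrightarrow> Lpw a b \<kappa> p u \<and> W1pw a b \<kappa> p (\<lambda>t. blinfun_apply J (u t))"

definition MR_norm :: "('x1::banach \<Rightarrow>\<^sub>L 'x0::banach) \<Rightarrow> real \<Rightarrow> real \<Rightarrow> real \<Rightarrow> real \<Rightarrow> (real \<Rightarrow> 'x1) \<Rightarrow> real" where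
  "MR_norm J p \<kappa> a b u = max (Lpw_norm a b \<kappa> p u) (W1pw_norm a b \<kappa> p (\<lambda>t. blinfun_apply J (u t)))"

definition trace_left :: "real \<Rightarrow> real \<Rightarrow> (real \<Rightarrow> 'x::real_normed_vector) \<Rightarrow> 'x \<Rightarrow> bool" where
  "trace_left a b g x \<longleftrightarrow> (\<exists>h. continuous_on {a..b} h \<and> h a = x \<and>
      (AE t in lborel. t \<in> {a<..<b} \<longrightarrow> g t = h t))"

definition strong_solution ::
  "('x1::banach \<Rightarrow>\<^sub>L 'x0::banach) \<Rightarrow> (real \<Rightarrow> ('x1 \<Rightarrow>\<^sub>L 'x0)) \<Rightarrow> real \<Rightarrow> real \<Rightarrow> (real \<Rightarrow> 'x0) \<Rightarrow> 'x0 \<Rightarrow> (real \<Rightarrow> 'x1) \<Rightarrow> bool" where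
  "strong_solution J A a b f ua u \<longleftrightarrow>
     Lpw a b 0 1 u \<and> Lpw a b 0 1 (\<lambda>t. blinfun_apply J (u t)) \<and>
     Lpw a b 0 1 (\<lambda>t. blinfun_apply (A t) (u t)) \<and>
     (\<exists>u'. Lpw a b 0 1 u' \<and> weak_deriv a b (\<lambda>t. blinfun_apply J (u t)) u' \<and>
        (AE t in lborel. t \<in> {a<..<b} \<longrightarrow> u' t + blinfun_apply (A t) (u t) = f t)) \<and>
     trace_left a b (\<lambda>t. blinfun_apply J (u t)) ua"

definition MR_consts ::
  "('x1::banach \<Rightarrow>\<^sub>L 'x0::banach) \<Rightarrow> (real \<Rightarrow> ('x1 \<Rightarrow>\<^sub>L 'x0)) \<Rightarrow> real \<Rightarrow> real \<Rightarrow> real \<Rightarrow> real \<Rightarrow> real set" where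
  "MR_consts J A p \<kappa> a b = {C. 0 \<le> C \<and>
     (\<forall>f \<tau> v. Lpw a b \<kappa> p f \<longrightarrow> \<tau> \<in> {a<..b} \<longrightarrow> MR J p \<kappa> a \<tau> v \<longrightarrow>
        strong_solution J A a \<tau> f 0 v \<longrightarrow> MR_norm J p \<kappa> a \<tau> v \<le> C * Lpw_norm a \<tau> \<kappa> p f)}"

definition max_reg ::
  "('x1::banach \<Rightarrow>\<^sub>L 'x0::banach) \<Rightarrow> (real \<Rightarrow> ('x1 \<Rightarrow>\<^sub>L 'x0)) \<Rightarrow> real \<Rightarrow> real \<Rightarrow> real \<Rightarrow> real \<Rightarrow> bool" where
  "max_reg J A p \<kappa> a b \<longleftrightarrow>
     (\<forall>f. Lpw a b \<kappa> p f \<longrightarrow>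
        (\<exists>u. MR J p \<kappa> a b u \<and> strong_solution J A a b f 0 u) \<and>
        (\<forall>u v. MR J p \<kappa> a b u \<and> strong_solution J A a b f 0 u \<and>
               MR J p \<kappa> a b v \<and> strong_solution J A a b f 0 v \<longrightarrow>
               (AE t in lborel. t \<in> {a<..<b} \<longrightarrow> u t = v t))) \<and>
     MR_consts J A p \<kappa> a b \<noteq> {}"

definition M_const ::
  "('x1::banach \<Rightarrow>\<^sub>L 'x0::banach) \<Rightarrow> (real \<Rightarrow> ('x1 \<Rightarrow>\<^sub>L 'x0)) \<Rightarrow> real \<Rightarrow> real \<Rightarrow> real \<Rightarrow> real \<Rightarrow> real" where
  "M_const J A p \<kappa> a b = Inf (MR_consts J A p \<kappa> a b)"

end

theory Submission
  imports Defs "HOL-Computational_Algebra.Polynomial" "HOL-Real_Asymp.Real_Asymp"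
begin

hide_const (open) Polynomial.content

definition smooth :: "(real \<Rightarrow> real) \<Rightarrow> bool" where
  "smooth f \<longleftrightarrow> (\<forall>n x. ((deriv ^^ n) f) differentiable (at x))"

lemma smooth_closed_class:
  assumes "\<And>k. k \<in> K \<Longrightarrow> (\<forall>x. k differentiable (at x)) \<and> deriv k \<in> K"
    and "f \<in> K"
  shows "smooth f"
proof -
  have "(deriv ^^ n) f \<in> K" for n
    by (induction n) (use assms in auto)
  then show ?thesis unfolding smooth_def using assms(1) by blast
qed

inductive_set alg :: "(real \<Rightarrow> real) set \<Rightarrow> (real \<Rightarrow> real) set" for S where
  base: "f \<in> S \<Longrightarrow> f \<in> alg S"
| const: "(\<lambda>x. c) \<in> alg S"
| add: "f \<in> alg S \<Longrightarrow> g \<in> alg S \<Longrightarrow> (\<lambda>x. f x + g x) \<in> alg S"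
| mult: "f \<in> alg S \<Longrightarrow> g \<in> alg S \<Longrightarrow> (\<lambda>x. f x * g x) \<in> alg S"

lemma deriv_eqI: "(\<And>x. (f has_real_derivative g x) (at x)) \<Longrightarrow> deriv f = g"
  using DERIV_imp_deriv by blast

lemma alg_closed:
  assumes "\<And>f. f \<in> S \<Longrightarrow> (\<forall>x. f differentiable (at x)) \<and> deriv f \<in> alg S"
    and "f \<in> alg S"
  shows "(\<forall>x. f differentiable (at x)) \<and> deriv f \<in> alg S"
  using assms(2)
proof induction
  case (base f)
  then show ?case using assms(1) by blast
next
  case (const c)
  have "deriv (\<lambda>x. c) = (\<lambda>x. 0)" by (rule deriv_eqI) auto
  then show ?case by (auto intro: alg.const)
next
  case (add f g)
  have "deriv (\<lambda>x. f x + g x) = (\<lambda>x. deriv f x + deriv g x)"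
    by (rule deriv_eqI) (use add in \<open>auto intro!: derivative_intros simp: DERIV_deriv_iff_real_differentiable\<close>)
  then show ?case using add by (auto intro: alg.add)
next
  case (mult f g)
  have "deriv (\<lambda>x. f x * g x) = (\<lambda>x. deriv f x * g x + deriv g x * f x)"
    by (rule deriv_eqI, rule DERIV_mult) (use mult in \<open>auto simp: DERIV_deriv_iff_real_differentiable\<close>)
  then show ?case using mult by (auto intro!: alg.add alg.mult)
qed

lemma smooth_alg:
  assumes "\<And>f. f \<in> S \<Longrightarrow> (\<forall>x. f differentiable (at x)) \<and> deriv f \<in> alg S"
    and "f \<in> alg S"
  shows "smooth f"
  by (rule smooth_closed_class[of "alg S"]) (use alg_closed[OF assms(1)] assms(2) in auto)

lemma smoothD: "smooth f \<Longrightarrow> (deriv ^^ n) f differentiable (at x)"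
  unfolding smooth_def by blast

lemma deriv_iter: "deriv ((deriv ^^ n) f) = (deriv ^^ Suc n) f"
  by simp

lemma smooth_deriv: "smooth f \<Longrightarrow> smooth (deriv f)"
  unfolding smooth_def by (metis funpow_Suc_right o_apply)

lemma smooth_iters:
  assumes "smooth f"
  shows "(deriv ^^ n) f differentiable (at x)" "deriv ((deriv ^^ n) f) = (deriv ^^ Suc n) f"
  using assms smoothD by auto

lemma smooth_mult:
  assumes "smooth f" "smooth g"
  shows "smooth (\<lambda>x. f x * g x)"
proof -
  let ?S = "range (\<lambda>n. (deriv ^^ n) f) \<union> range (\<lambda>n. (deriv ^^ n) g)"
  show ?thesis
  proof (rule smooth_alg[of ?S])
    fix h assume "h \<in> ?S"
    then show "(\<forall>x. h differentiable (at x)) \<and> deriv h \<in> alg ?S"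
    proof
      assume "h \<in> range (\<lambda>n. (deriv ^^ n) f)"
      then obtain n where h: "h = (deriv ^^ n) f" by blast
      have "deriv h \<in> ?S" unfolding h deriv_iter by blast
      then show ?thesis using h smoothD[OF assms(1)] by (blast intro: alg.base)
    next
      assume "h \<in> range (\<lambda>n. (deriv ^^ n) g)"
      then obtain n where h: "h = (deriv ^^ n) g" by blast
      have "deriv h \<in> ?S" unfolding h deriv_iter by blast
      then show ?thesis using h smoothD[OF assms(2)] by (blast intro: alg.base)
    qed
  next
    show "(\<lambda>x. f x * g x) \<in> alg ?S"
      by (rule alg.mult; rule alg.base) (auto intro: range_eqI[where x=0])
  qed
qed

lemma smooth_add:
  assumes "smooth f" "smooth g"
  shows "smooth (\<lambda>x. f x + g x)"
proof -
  let ?S = "range (\<lambda>n. (deriv ^^ n) f) \<union> range (\<lambda>n. (deriv ^^ n) g)"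
  show ?thesis
  proof (rule smooth_alg[of ?S])
    fix h assume "h \<in> ?S"
    then show "(\<forall>x. h differentiable (at x)) \<and> deriv h \<in> alg ?S"
    proof
      assume "h \<in> range (\<lambda>n. (deriv ^^ n) f)"
      then obtain n where h: "h = (deriv ^^ n) f" by blast
      have "deriv h \<in> ?S" unfolding h deriv_iter by blast
      then show ?thesis using h smoothD[OF assms(1)] by (blast intro: alg.base)
    next
      assume "h \<in> range (\<lambda>n. (deriv ^^ n) g)"
      then obtain n where h: "h = (deriv ^^ n) g" by blast
      have "deriv h \<in> ?S" unfolding h deriv_iter by blast
      then show ?thesis using h smoothD[OF assms(2)] by (blast intro: alg.base)
    qed
  next
    show "(\<lambda>x. f x + g x) \<in> alg ?S"
      by (rule alg.add; rule alg.base) (auto intro: range_eqI[where x=0])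
  qed
qed

lemma smooth_const: "smooth (\<lambda>x. c)"
  by (rule smooth_alg[of "{}"]) (auto intro: alg.const)

lemma smooth_id: "smooth (\<lambda>x. x)"
proof (rule smooth_alg[of "{\<lambda>x. x}"])
  fix f :: "real \<Rightarrow> real" assume "f \<in> {\<lambda>x. x}"
  moreover have "deriv (\<lambda>x::real. x) = (\<lambda>x. 1)" by (rule deriv_eqI) auto
  ultimately show "(\<forall>x. f differentiable (at x)) \<and> deriv f \<in> alg {\<lambda>x. x}"
    by (auto intro: alg.const)
qed (auto intro: alg.base)

lemma smooth_comp:
  assumes "smooth F" "smooth q"
  shows "smooth (\<lambda>x. F (q x))"
proof -
  let ?S = "range (\<lambda>n. (\<lambda>x. (deriv ^^ n) F (q x))) \<union> range (\<lambda>n. (deriv ^^ n) q)"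
  show ?thesis
  proof (rule smooth_alg[of ?S])
    fix h assume "h \<in> ?S"
    then consider n where "h = (\<lambda>x. (deriv ^^ n) F (q x))" | n where "h = (deriv ^^ n) q" by blast
    then show "(\<forall>x. h differentiable (at x)) \<and> deriv h \<in> alg ?S"
    proof cases
      case 1
      have dF: "\<And>y. ((deriv ^^ n) F has_real_derivative (deriv ^^ Suc n) F y) (at y)"
        using assms(1) smoothD by (metis DERIV_deriv_iff_real_differentiable funpow.simps(2) o_apply)
      have dq: "\<And>y. (q has_real_derivative deriv q y) (at y)"
        using smoothD[OF assms(2), of 0] by (simp add: DERIV_deriv_iff_real_differentiable)
      have D: "\<And>x. (h has_real_derivative (deriv ^^ Suc n) F (q x) * deriv q x) (at x)"
        unfolding 1 by (rule DERIV_chain2[OF dF dq])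
      then have "deriv h = (\<lambda>x. (deriv ^^ Suc n) F (q x) * deriv q x)"
        by (rule deriv_eqI)
      moreover have "(\<lambda>x. (deriv ^^ Suc n) F (q x) * deriv q x) \<in> alg ?S"
        by (rule alg.mult; rule alg.base) (auto intro: range_eqI[where x="Suc n"] range_eqI[where x="Suc 0"])
      ultimately show ?thesis using D real_differentiable_def by metis
    next
      case 2
      have "deriv h \<in> ?S" unfolding 2 deriv_iter by blast
      then show ?thesis using 2 smoothD[OF assms(2)] by (blast intro: alg.base)
    qed
  next
    show "(\<lambda>x. F (q x)) \<in> alg ?S"
      by (rule alg.base) (auto intro: range_eqI[where x=0])
  qed
qed

lemma smooth_diff: "smooth f \<Longrightarrow> smooth g \<Longrightarrow> smooth (\<lambda>x. f x - g x)"
proof -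
  assume "smooth f" "smooth g"
  then have "smooth (\<lambda>x. f x + (-1) * g x)"
    by (intro smooth_add smooth_mult smooth_const)
  then show ?thesis by simp
qed

lemma smooth_prod:
  fixes n :: nat
  assumes "\<And>k. k < n \<Longrightarrow> smooth (f k)"
  shows "smooth (\<lambda>x. \<Prod>k<n. f k x)"
  using assms
proof (induction n)
  case 0 then show ?case by (simp add: smooth_const)
next
  case (Suc n)
  then show ?case by (simp add: smooth_mult)
qed

definition Gp :: "real poly \<Rightarrow> real \<Rightarrow> real" where
  "Gp P y = (if y > 0 then poly P (1/y) * exp (-1/y) else 0)"

lemma poly_div_exp_0: "((\<lambda>z. poly R z / exp z) \<longlongrightarrow> (0::real)) at_top"
proof -
  have "((\<lambda>z. \<Sum>i\<le>degree R. coeff R i * (z ^ i / exp z)) \<longlongrightarrow> (\<Sum>i\<le>degree R. coeff R i * 0)) at_top"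
    by (intro tendsto_sum tendsto_mult tendsto_const tendsto_power_div_exp_0)
  then show ?thesis
    by (simp add: poly_altdef sum_divide_distrib)
qed

lemma Gp_deriv_pos:
  assumes "y > 0"
  shows "(Gp P has_real_derivative Gp (monom 1 2 * (P - pderiv P)) y) (at y)"
proof -
  have d: "((\<lambda>y. poly P (1/y) * exp (-1/y)) has_real_derivative
      poly (pderiv P) (1/y) * (- 1 / y^2) * exp (-1/y) + poly P (1/y) * (exp (-1/y) * (1/y^2))) (at y)"
    using assms
    by (auto intro!: derivative_eq_intros DERIV_chain2[OF poly_DERIV] simp: power2_eq_square field_simps)
  have e: "poly (pderiv P) (1/y) * (- 1 / y^2) * exp (-1/y) + poly P (1/y) * (exp (-1/y) * (1/y^2))
       = Gp (monom 1 2 * (P - pderiv P)) y"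
    using assms by (simp add: Gp_def poly_monom field_simps power2_eq_square)
  show ?thesis
    by (rule has_field_derivative_transform_within_open[OF d[unfolded e], of "{0<..}"])
       (use assms in \<open>auto simp: Gp_def\<close>)
qed

lemma Gp_deriv_neg:
  assumes "y < 0"
  shows "(Gp P has_real_derivative Gp Q y) (at y)"
proof -
  have "((\<lambda>y. 0) has_real_derivative Gp Q y) (at y)" using assms by (simp add: Gp_def)
  then show ?thesis
    by (rule has_field_derivative_transform_within_open[of _ _ _ "{..<0}"])
       (use assms in \<open>auto simp: Gp_def\<close>)
qed

lemma Gp_deriv_0:
  shows "(Gp P has_real_derivative Gp Q 0) (at 0)"
proof -
  have "((\<lambda>h. (Gp P (0 + h) - Gp P 0) / h) \<longlongrightarrow> 0) (at_left 0)"
  proof (rule Lim_transform_eventually[OF tendsto_const])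
    show "\<forall>\<^sub>F h in at_left 0. 0 = (Gp P (0 + h) - Gp P 0) / h"
      by (auto simp: eventually_at_left_field Gp_def intro: exI[of _ "-1"])
  qed
  moreover have "((\<lambda>h. (Gp P (0 + h) - Gp P 0) / h) \<longlongrightarrow> 0) (at_right 0)"
  proof -
    have "((\<lambda>h. poly (P * [:0,1:]) (inverse h) / exp (inverse h)) \<longlongrightarrow> 0) (at_right (0::real))"
      by (rule filterlim_compose[OF poly_div_exp_0 filterlim_inverse_at_top_right])
    then show ?thesis
    proof (rule Lim_transform_eventually)
      show "\<forall>\<^sub>F h in at_right 0. poly (P * [:0, 1:]) (inverse h) / exp (inverse h)
              = (Gp P (0 + h) - Gp P 0) / h"
        by (auto simp: eventually_at_right_field Gp_def exp_minus field_simps intro!: exI[of _ 1])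
    qed
  qed
  ultimately have "((\<lambda>h. (Gp P (0 + h) - Gp P 0) / h) \<longlongrightarrow> 0) (at 0)"
    by (simp add: filterlim_at_split)
  then show ?thesis by (simp add: DERIV_def Gp_def)
qed

lemma Gp_deriv: "(Gp P has_real_derivative Gp (monom 1 2 * (P - pderiv P)) y) (at y)"
  using Gp_deriv_pos Gp_deriv_neg Gp_deriv_0 by (metis linorder_neqE_linordered_idom)

lemma smooth_Gp: "smooth (Gp P)"
proof (rule smooth_closed_class[of "range Gp"])
  fix k assume "k \<in> range Gp"
  then obtain P where k: "k = Gp P" by blast
  have "deriv k = Gp (monom 1 2 * (P - pderiv P))"
    unfolding k by (rule deriv_eqI[OF Gp_deriv])
  then show "(\<forall>x. k differentiable (at x)) \<and> deriv k \<in> range Gp"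
    using Gp_deriv k real_differentiable_def by blast
qed auto

definition flat :: "real \<Rightarrow> real" where
  "flat y = (if y > 0 then exp (-1/y) else 0)"

lemma flat_Gp: "flat = Gp 1"
  by (auto simp: flat_def Gp_def)

lemma smooth_flat: "smooth flat"
  by (simp add: flat_Gp smooth_Gp)

lemma flat_deriv: "(flat has_real_derivative (if y > 0 then exp (-1/y) / y^2 else 0)) (at y)"
proof -
  have "Gp (monom 1 2 * (1 - pderiv 1)) y = (if y > 0 then exp (-1/y) / y^2 else 0)"
    by (simp add: Gp_def poly_monom power_one_over)
  then show ?thesis using Gp_deriv[of 1 y] flat_Gp by simp
qed

lemma deriv_flat: "deriv flat y = (if y > 0 then exp (-1/y) / y^2 else 0)"
  using flat_deriv DERIV_imp_deriv by blast

lemma deriv_flat_nonneg: "0 \<le> deriv flat y"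
  by (simp add: deriv_flat)

lemma flat_nonneg: "0 \<le> flat y"
  by (simp add: flat_def)

lemma flat_le1: "flat y \<le> 1"
  by (simp add: flat_def)

lemma flat_zero: "y \<le> 0 \<Longrightarrow> flat y = 0"
  by (simp add: flat_def)

lemma flat_pos: "y > 0 \<Longrightarrow> flat y > 0"
  by (simp add: flat_def)

lemma flat_mono: "x \<le> y \<Longrightarrow> flat x \<le> flat y"
  by (auto simp: flat_def divide_simps)

lemma flat_at_top: "(flat \<longlongrightarrow> 1) at_top"
proof -
  have "(inverse \<longlongrightarrow> (0::real)) at_top"
    by (rule tendsto_inverse_0_at_top[OF filterlim_ident])
  from tendsto_exp[OF tendsto_minus[OF this]]
  have "((\<lambda>y::real. exp (- inverse y)) \<longlongrightarrow> 1) at_top" by simp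
  then show ?thesis
  proof (rule Lim_transform_eventually[where f="\<lambda>y. exp (- inverse y)", simplified])
    show "\<forall>\<^sub>F x in at_top. exp (- inverse x) = flat x"
      using eventually_gt_at_top[of 0] by eventually_elim (simp add: flat_def divide_inverse)
  qed
qed

lemma flat_seq: "c > 0 \<Longrightarrow> (\<lambda>n. flat (real n * c - e)) \<longlonglongrightarrow> 1"
  by (rule filterlim_compose[OF flat_at_top]) real_asymp

lemma continuous_flat: "continuous_on S flat"
  using smoothD[OF smooth_flat, of 0] differentiable_imp_continuous_within
  by (auto intro!: continuous_at_imp_continuous_on)

lemma continuous_deriv_flat: "continuous_on S (deriv flat)"
  using smoothD[OF smooth_flat, of 1] differentiable_imp_continuous_within
  by (auto intro!: continuous_at_imp_continuous_on)



lemma riemann_sum_bound: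
  fixes f g :: "real \<Rightarrow> 'a::banach"
  assumes D: "D tagged_division_of {c..d}"
    and le: "\<And>x. x \<in> {c..d} \<Longrightarrow> norm (f x - g x) \<le> e x"
  shows "norm ((\<Sum>(x,K)\<in>D. content K *\<^sub>R f x) - (\<Sum>(x,K)\<in>D. content K *\<^sub>R g x))
          \<le> (\<Sum>(x,K)\<in>D. content K *\<^sub>R e x)"
proof -
  have "(\<Sum>(x,K)\<in>D. content K *\<^sub>R f x) - (\<Sum>(x,K)\<in>D. content K *\<^sub>R g x)
        = (\<Sum>(x,K)\<in>D. content K *\<^sub>R (f x - g x))"
    by (simp add: split_def sum_subtractf scaleR_diff_right)
  also have "norm \<dots> \<le> (\<Sum>(x,K)\<in>D. norm (content K *\<^sub>R (f x - g x)))"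
    by (rule norm_sum[THEN order_trans]) (simp add: split_def)
  also have "\<dots> \<le> (\<Sum>(x,K)\<in>D. content K *\<^sub>R e x)"
  proof (rule sum_mono, clarify)
    fix x K assume xK: "(x, K) \<in> D"
    then have "x \<in> {c..d}" using D by blast
    then have "norm (f x - g x) \<le> e x" by (rule le)
    moreover have "0 \<le> content K" by simp
    ultimately show "norm (content K *\<^sub>R (f x - g x)) \<le> content K *\<^sub>R e x"
      by (simp add: mult_left_mono)
  qed
  finally show ?thesis .
qed

lemma norm_tri3:
  fixes A B C D :: "'a::real_normed_vector"
  shows "norm (A - B) \<le> norm (A - C) + norm (C - D) + norm (B - D)"
proof -
  have "A - B = (A - C) + (C - D) - (B - D)" by simp
  then have "norm (A - B) \<le> norm ((A - C) + (C - D)) + norm (B - D)"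
    by (metis norm_triangle_ineq4)
  also have "\<dots> \<le> norm (A - C) + norm (C - D) + norm (B - D)"
    using norm_triangle_ineq[of "A - C" "C - D"] by simp
  finally show ?thesis .
qed

lemma hk_approx:
  fixes f :: "real \<Rightarrow> 'a::banach" and g :: "nat \<Rightarrow> real \<Rightarrow> 'a" and e :: "nat \<Rightarrow> real \<Rightarrow> real"
  assumes gi: "\<And>n. g n integrable_on {c..d}" and ei: "\<And>n. e n integrable_on {c..d}"
    and le: "\<And>n x. x \<in> {c..d} \<Longrightarrow> norm (f x - g n x) \<le> e n x"
    and lim: "(\<lambda>n. integral {c..d} (e n)) \<longlonglongrightarrow> 0"
  shows "f integrable_on {c..d}" "(\<lambda>n. integral {c..d} (g n)) \<longlonglongrightarrow> integral {c..d} f"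
proof -
  show fi: "f integrable_on {c..d}"
    unfolding box_real(2)[symmetric] integrable_Cauchy
  proof (intro allI impI)
    fix \<epsilon> :: real assume "\<epsilon> > 0"
    then have "\<epsilon>/4 > 0" by simp
    from lim[THEN LIMSEQ_D, OF this] obtain n where n: "norm (integral {c..d} (e n)) < \<epsilon>/4"
      by auto
    from gi[of n] obtain \<gamma>1 where g1: "gauge \<gamma>1" and
      c1: "\<And>D1 D2. D1 tagged_division_of (cbox c d) \<Longrightarrow> \<gamma>1 fine D1 \<Longrightarrow>
          D2 tagged_division_of (cbox c d) \<Longrightarrow> \<gamma>1 fine D2 \<Longrightarrow>
          norm ((\<Sum>(x,K)\<in>D1. content K *\<^sub>R g n x) - (\<Sum>(x,K)\<in>D2. content K *\<^sub>R g n x)) < \<epsilon>/4"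
      unfolding box_real(2)[symmetric] integrable_Cauchy using \<open>\<epsilon>/4 > 0\<close> by meson
    have "(e n has_integral integral {c..d} (e n)) {c..d}" using ei by blast
    then obtain \<gamma>2 where g2: "gauge \<gamma>2" and
      c2: "\<And>D. D tagged_division_of {c..d} \<Longrightarrow> \<gamma>2 fine D \<Longrightarrow>
          norm ((\<Sum>(x,K)\<in>D. content K *\<^sub>R e n x) - integral {c..d} (e n)) < \<epsilon>/8"
      unfolding has_integral_real using \<open>\<epsilon> > 0\<close> by (meson divide_pos_pos zero_less_numeral)
    have bnd: "norm ((\<Sum>(x,K)\<in>D. content K *\<^sub>R f x) - (\<Sum>(x,K)\<in>D. content K *\<^sub>R g n x)) < 3*\<epsilon>/8"
      if D: "D tagged_division_of {c..d}" "\<gamma>2 fine D" for D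
    proof -
      have "norm ((\<Sum>(x,K)\<in>D. content K *\<^sub>R f x) - (\<Sum>(x,K)\<in>D. content K *\<^sub>R g n x))
          \<le> (\<Sum>(x,K)\<in>D. content K *\<^sub>R e n x)"
        by (rule riemann_sum_bound[OF D(1) le])
      also have "\<dots> < integral {c..d} (e n) + \<epsilon>/8"
        using c2[OF D] unfolding real_norm_def by linarith
      also have "\<dots> < 3*\<epsilon>/8" using n by simp
      finally show ?thesis .
    qed
    show "\<exists>\<gamma>. gauge \<gamma> \<and> (\<forall>D1 D2. D1 tagged_division_of cbox c d \<and> \<gamma> fine D1 \<and>
            D2 tagged_division_of cbox c d \<and> \<gamma> fine D2 \<longrightarrow>
            norm ((\<Sum>(x,K)\<in>D1. content K *\<^sub>R f x) - (\<Sum>(x,K)\<in>D2. content K *\<^sub>R f x)) < \<epsilon>)"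
    proof (intro exI conjI allI impI)
      show "gauge (\<lambda>x. \<gamma>1 x \<inter> \<gamma>2 x)" using g1 g2 by (rule gauge_Int)
    next
      fix D1 D2 assume H: "D1 tagged_division_of cbox c d \<and> (\<lambda>x. \<gamma>1 x \<inter> \<gamma>2 x) fine D1 \<and>
            D2 tagged_division_of cbox c d \<and> (\<lambda>x. \<gamma>1 x \<inter> \<gamma>2 x) fine D2"
      then have H1: "D1 tagged_division_of {c..d}" "\<gamma>1 fine D1" "\<gamma>2 fine D1"
        and H2: "D2 tagged_division_of {c..d}" "\<gamma>1 fine D2" "\<gamma>2 fine D2"
        by (auto simp: fine_Int)
      let ?S = "\<lambda>h D. (\<Sum>(x,K)\<in>D. content K *\<^sub>R h x)"
      have "norm (?S f D1 - ?S f D2) \<le> norm (?S f D1 - ?S (g n) D1) + norm (?S (g n) D1 - ?S (g n) D2)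
              + norm (?S f D2 - ?S (g n) D2)"
        by (rule norm_tri3)
      also have "\<dots> < 3*\<epsilon>/8 + \<epsilon>/4 + 3*\<epsilon>/8"
        using bnd[OF H1(1,3)] bnd[OF H2(1,3)] c1[OF H1(1)[folded box_real(2)] H1(2) H2(1)[folded box_real(2)] H2(2)]
        by linarith
      finally show "norm (?S f D1 - ?S f D2) < \<epsilon>" by simp
    qed
  qed
  show "(\<lambda>n. integral {c..d} (g n)) \<longlonglongrightarrow> integral {c..d} f"
  proof (rule tendsto_sandwich[where f="\<lambda>n. 0" and h="\<lambda>n. integral {c..d} (e n)", THEN tendsto_norm_zero_cancel[of "\<lambda>n. integral {c..d} (g n) - integral {c..d} f", THEN Lim_null[THEN iffD2]], rotated 2])
    show "\<forall>\<^sub>F n in sequentially. norm (integral {c..d} (g n) - integral {c..d} f) \<le> integral {c..d} (e n)"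
    proof (intro always_eventually allI)
      fix n
      have "norm (integral {c..d} (g n) - integral {c..d} f) = norm (integral {c..d} (\<lambda>x. f x - g n x))"
        using fi gi[of n] by (simp add: integral_diff norm_minus_commute)
      also have "\<dots> \<le> integral {c..d} (e n)"
        by (rule integral_norm_bound_integral) (use fi gi ei le in \<open>auto intro: integrable_diff\<close>)
      finally show "norm (integral {c..d} (g n) - integral {c..d} f) \<le> integral {c..d} (e n)" .
    qed
  qed (use lim in auto)
qed

lemma sm_real:
  fixes f :: "real \<Rightarrow> 'a::real_normed_vector"
  assumes "strongly_measurable_on S f" "continuous_on UNIV \<Phi>"
  obtains r :: "real \<Rightarrow> real" where "r \<in> borel_measurable lborel" "AE t in lborel. t \<in> S \<longrightarrow> \<Phi> (f t) = r t"
proof -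
  from assms(1) obtain s where s: "\<And>n. simple_function lborel (s n)"
    and lim: "AE t in lborel. t \<in> S \<longrightarrow> (\<lambda>n. s n t) \<longlonglongrightarrow> f t"
    unfolding strongly_measurable_on_def by blast
  define r where "r t = lim (\<lambda>n. \<Phi> (s n t))" for t
  have m: "(\<lambda>t. \<Phi> (s n t)) \<in> borel_measurable lborel" for n
    using borel_measurable_simple_function[OF simple_function_compose[OF s[of n], of \<Phi>]] by (simp add: o_def)
  have "r \<in> borel_measurable lborel" unfolding r_def by (rule borel_measurable_lim_metric[OF m])
  moreover have "AE t in lborel. t \<in> S \<longrightarrow> \<Phi> (f t) = r t"
    using lim
  proof eventually_elim
    case (elim t)
    show ?case
    proof
      assume "t \<in> S"
      then have "(\<lambda>n. s n t) \<longlonglongrightarrow> f t" using elim by blast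
      moreover have "isCont \<Phi> (f t)" using assms(2) by (simp add: continuous_on_eq_continuous_at)
      ultimately have "(\<lambda>n. \<Phi> (s n t)) \<longlonglongrightarrow> \<Phi> (f t)" by (rule isCont_tendsto_compose[rotated])
      then show "\<Phi> (f t) = r t" unfolding r_def by (simp add: limI)
    qed
  qed
  ultimately show ?thesis using that by blast
qed

lemma sm_sep:
  fixes f :: "real \<Rightarrow> 'a::real_normed_vector"
  assumes "strongly_measurable_on S f"
  obtains C where "countable C" "AE t in lborel. t \<in> S \<longrightarrow> f t \<in> closure C"
proof -
  from assms(1) obtain s where s: "\<And>n. simple_function lborel (s n)"
    and lim: "AE t in lborel. t \<in> S \<longrightarrow> (\<lambda>n. s n t) \<longlonglongrightarrow> f t"
    unfolding strongly_measurable_on_def by blast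
  define C where "C = (\<Union>n. range (s n))"
  have "finite (range (s n))" for n using simple_functionD(1)[OF s[of n]] by simp
  then have "countable C" unfolding C_def by (auto intro: countable_finite)
  moreover have "AE t in lborel. t \<in> S \<longrightarrow> f t \<in> closure C"
    using lim
  proof eventually_elim
    case (elim t)
    show ?case
    proof
      assume "t \<in> S"
      then have "(\<lambda>n. s n t) \<longlonglongrightarrow> f t" using elim by blast
      moreover have "\<forall>n. s n t \<in> C" unfolding C_def by blast
      ultimately show "f t \<in> closure C" unfolding closure_sequential
        by (intro exI[where x="\<lambda>n. s n t"] conjI) auto
    qed
  qed
  ultimately show ?thesis using that by blast
qed

lemma sm_mono: "S' \<subseteq> S \<Longrightarrow> strongly_measurable_on S f \<Longrightarrow> strongly_measurable_on S' f"
  unfolding strongly_measurable_on_def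
proof (elim exE conjE)
  fix s assume "S' \<subseteq> S" "\<forall>n. simple_function lborel (s n)" "AE t in lborel. t \<in> S \<longrightarrow> (\<lambda>n. s n t) \<longlonglongrightarrow> f t"
  then show "\<exists>s. (\<forall>n. simple_function lborel (s n)) \<and> (AE t in lborel. t \<in> S' \<longrightarrow> (\<lambda>n. s n t) \<longlonglongrightarrow> f t)"
    by (intro exI[of _ s]) (auto elim!: AE_mp)
qed

lemma sm_cong: "(\<And>t. t \<in> S \<Longrightarrow> f t = g t) \<Longrightarrow> strongly_measurable_on S f \<Longrightarrow> strongly_measurable_on S g"
  unfolding strongly_measurable_on_def
proof (elim exE conjE)
  fix s assume "\<And>t. t \<in> S \<Longrightarrow> f t = g t" "\<forall>n. simple_function lborel (s n)" "AE t in lborel. t \<in> S \<longrightarrow> (\<lambda>n. s n t) \<longlonglongrightarrow> f t"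
  then show "\<exists>s. (\<forall>n. simple_function lborel (s n)) \<and> (AE t in lborel. t \<in> S \<longrightarrow> (\<lambda>n. s n t) \<longlonglongrightarrow> g t)"
    by (intro exI[of _ s]) (auto elim!: AE_mp)
qed

lemma sm_zero: "strongly_measurable_on S (\<lambda>t. 0)"
  unfolding strongly_measurable_on_def by (auto intro!: exI[of _ "\<lambda>n t. 0"])

lemma sm_diff:
  fixes f g :: "real \<Rightarrow> 'a::real_normed_vector"
  assumes "strongly_measurable_on S f" "strongly_measurable_on S g"
  shows "strongly_measurable_on S (\<lambda>t. f t - g t)"
proof -
  from assms(1) obtain s where s: "\<And>n. simple_function lborel (s n)"
    and lim: "AE t in lborel. t \<in> S \<longrightarrow> (\<lambda>n. s n t) \<longlonglongrightarrow> f t"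
    unfolding strongly_measurable_on_def by blast
  from assms(2) obtain s' where s': "\<And>n. simple_function lborel (s' n)"
    and lim': "AE t in lborel. t \<in> S \<longrightarrow> (\<lambda>n. s' n t) \<longlonglongrightarrow> g t"
    unfolding strongly_measurable_on_def by blast
  show ?thesis unfolding strongly_measurable_on_def
  proof (intro exI conjI allI)
    show "simple_function lborel (\<lambda>t. s n t - s' n t)" for n
      by (rule simple_function_compose2[OF s s'])
    show "AE t in lborel. t \<in> S \<longrightarrow> (\<lambda>n. s n t - s' n t) \<longlonglongrightarrow> f t - g t"
      using lim lim' by eventually_elim (auto intro: tendsto_diff)
  qed
qed

lemma sm_ext:
  fixes f :: "real \<Rightarrow> 'a::real_normed_vector"
  assumes "B \<in> sets lborel" "B \<subseteq> S" "strongly_measurable_on S f"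
  shows "strongly_measurable_on T (\<lambda>t. if t \<in> B then f t else 0)"
proof -
  from assms(3) obtain s where s: "\<And>n. simple_function lborel (s n)"
    and lim: "AE t in lborel. t \<in> S \<longrightarrow> (\<lambda>n. s n t) \<longlonglongrightarrow> f t"
    unfolding strongly_measurable_on_def by blast
  show ?thesis unfolding strongly_measurable_on_def
  proof (intro exI conjI allI)
    show "simple_function lborel (\<lambda>t. if t \<in> B then s n t else 0)" for n
      by (rule simple_function_If[OF s]) (use assms(1) in auto)
    show "AE t in lborel. t \<in> T \<longrightarrow> (\<lambda>n. if t \<in> B then s n t else 0) \<longlonglongrightarrow> (if t \<in> B then f t else 0)"
      using lim by eventually_elim (use assms(2) in auto)
  qed
qed

lemma sm_blinfun:
  assumes "strongly_measurable_on S f"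
  shows "strongly_measurable_on S (\<lambda>t. blinfun_apply L (f t))"
proof -
  from assms(1) obtain s where s: "\<And>n. simple_function lborel (s n)"
    and lim: "AE t in lborel. t \<in> S \<longrightarrow> (\<lambda>n. s n t) \<longlonglongrightarrow> f t"
    unfolding strongly_measurable_on_def by blast
  show ?thesis unfolding strongly_measurable_on_def
  proof (intro exI conjI allI)
    show "simple_function lborel (\<lambda>t. blinfun_apply L (s n t))" for n
      using simple_function_compose[OF s[of n], of "blinfun_apply L"] by (simp add: o_def)
    show "AE t in lborel. t \<in> S \<longrightarrow> (\<lambda>n. blinfun_apply L (s n t)) \<longlonglongrightarrow> blinfun_apply L (f t)"
      using lim by eventually_elim (auto intro: blinfun.tendsto tendsto_const)
  qed
qed

lemma Lpw_mono:
  assumes "Lpw a b \<kappa> p f" "a \<le> a'" "b' \<le> b"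
  shows "Lpw a' b' \<kappa> p f"
proof -
  have "(\<integral>\<^sup>+ t \<in> {a'<..<b'}. ennreal (\<bar>t\<bar> powr \<kappa> * norm (f t) powr p) \<partial>lborel)
      \<le> (\<integral>\<^sup>+ t \<in> {a<..<b}. ennreal (\<bar>t\<bar> powr \<kappa> * norm (f t) powr p) \<partial>lborel)"
    by (rule nn_integral_mono) (use assms(2,3) in \<open>auto simp: indicator_def\<close>)
  moreover have "{a'<..<b'} \<subseteq> {a<..<b}" using assms(2,3) by auto
  ultimately show ?thesis using assms(1) sm_mono[of "{a'<..<b'}" "{a<..<b}" f] unfolding Lpw_def
    by (auto intro: le_less_trans)
qed

lemma Lpw_int_cong:
  assumes "\<And>t. t \<in> {a<..<b} \<Longrightarrow> f t = g t"
  shows "(\<integral>\<^sup>+ t \<in> {a<..<b}. ennreal (\<bar>t\<bar> powr \<kappa> * norm (f t) powr p) \<partial>lborel)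
       = (\<integral>\<^sup>+ t \<in> {a<..<b}. ennreal (\<bar>t\<bar> powr \<kappa> * norm (g t) powr p) \<partial>lborel)"
  by (rule nn_integral_cong) (use assms in \<open>auto simp: indicator_def\<close>)

lemma Lpw_cong:
  assumes "\<And>t. t \<in> {a<..<b} \<Longrightarrow> f t = g t"
  shows "Lpw a b \<kappa> p f \<longleftrightarrow> Lpw a b \<kappa> p g" "Lpw_norm a b \<kappa> p f = Lpw_norm a b \<kappa> p g"
  using Lpw_int_cong[OF assms] sm_cong[of "{a<..<b}" f g] sm_cong[of "{a<..<b}" g f] assms
  unfolding Lpw_def Lpw_norm_def by auto

lemma Lpw_ext:
  assumes "Lpw a b \<kappa> p f" "0 < p"
  shows "Lpw a0 b0 \<kappa> p (\<lambda>t. if t \<in> {a<..<b} then f t else 0)"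
proof -
  have "(\<integral>\<^sup>+ t \<in> {a0<..<b0}. ennreal (\<bar>t\<bar> powr \<kappa> * norm (if t \<in> {a<..<b} then f t else 0) powr p) \<partial>lborel)
      \<le> (\<integral>\<^sup>+ t \<in> {a<..<b}. ennreal (\<bar>t\<bar> powr \<kappa> * norm (f t) powr p) \<partial>lborel)"
    by (rule nn_integral_mono) (use assms(2) in \<open>auto simp: indicator_def\<close>)
  moreover have "strongly_measurable_on {a0<..<b0} (\<lambda>t. if t \<in> {a<..<b} then f t else 0)"
    by (rule sm_ext) (use assms(1) in \<open>auto simp: Lpw_def\<close>)
  ultimately show ?thesis using assms unfolding Lpw_def
    by (auto simp: top.not_eq_extremum intro: le_less_trans)
qed

lemma Lpw_ext_norm:
  assumes "0 < p" "a0 \<le> a" "b \<le> b0"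
  shows "Lpw_norm a0 b0 \<kappa> p (\<lambda>t. if t \<in> {a<..<b} then f t else 0) = Lpw_norm a b \<kappa> p f"
proof -
  have "(\<integral>\<^sup>+ t \<in> {a0<..<b0}. ennreal (\<bar>t\<bar> powr \<kappa> * norm (if t \<in> {a<..<b} then f t else 0) powr p) \<partial>lborel)
      = (\<integral>\<^sup>+ t \<in> {a<..<b}. ennreal (\<bar>t\<bar> powr \<kappa> * norm (f t) powr p) \<partial>lborel)"
    by (rule nn_integral_cong) (use assms in \<open>auto simp: indicator_def\<close>)
  then show ?thesis unfolding Lpw_norm_def by simp
qed

lemma Lpw_zero:
  assumes "0 < p"
  shows "Lpw a b \<kappa> p (\<lambda>t. 0)" "Lpw_norm a b \<kappa> p (\<lambda>t. 0) = 0"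
  using assms by (auto simp: Lpw_def Lpw_norm_def sm_zero)

lemma Lpw_norm_nonneg: "0 \<le> Lpw_norm a b \<kappa> p f"
  by (simp add: Lpw_norm_def)

lemma Lpw_borel:
  assumes "Lpw a b \<kappa> p f"
  obtains r where "r \<in> borel_measurable lborel" "\<And>t. 0 \<le> r t"
    "AE t in lborel. t \<in> {a<..<b} \<longrightarrow> norm (f t) = r t"
    "(\<integral>\<^sup>+ t \<in> {a<..<b}. ennreal (\<bar>t\<bar> powr \<kappa> * r t powr p) \<partial>lborel)
       = (\<integral>\<^sup>+ t \<in> {a<..<b}. ennreal (\<bar>t\<bar> powr \<kappa> * norm (f t) powr p) \<partial>lborel)"
proof -
  obtain r0 where r0: "r0 \<in> borel_measurable lborel" "AE t in lborel. t \<in> {a<..<b} \<longrightarrow> norm (f t) = r0 t"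
    using sm_real[of "{a<..<b}" f norm] assms unfolding Lpw_def by (auto intro: continuous_on_norm_id)
  define r where "r t = \<bar>r0 t\<bar>" for t
  have m: "r \<in> borel_measurable lborel" unfolding r_def using r0(1) by measurable
  have ae: "AE t in lborel. t \<in> {a<..<b} \<longrightarrow> norm (f t) = r t"
    using r0(2) by eventually_elim (auto simp: r_def dest: sym)
  have "(\<integral>\<^sup>+ t \<in> {a<..<b}. ennreal (\<bar>t\<bar> powr \<kappa> * r t powr p) \<partial>lborel)
       = (\<integral>\<^sup>+ t \<in> {a<..<b}. ennreal (\<bar>t\<bar> powr \<kappa> * norm (f t) powr p) \<partial>lborel)"
    by (rule nn_integral_cong_AE) (use ae in \<open>eventually_elim, auto simp: indicator_def\<close>)
  then show ?thesis using that m ae by (auto simp: r_def)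
qed

lemma powr_sum_bound:
  fixes x y z p :: real
  assumes "0 \<le> x" "x \<le> y + z" "0 \<le> y" "0 \<le> z" "0 < p"
  shows "x powr p \<le> 2 powr p * (y powr p + z powr p)"
proof -
  have "x \<le> 2 * max y z" using assms by linarith
  then have "x powr p \<le> (2 * max y z) powr p" using assms by (intro powr_mono2) auto
  also have "\<dots> = 2 powr p * max y z powr p" using assms by (simp add: powr_mult)
  also have "\<dots> \<le> 2 powr p * (y powr p + z powr p)"
    using assms by (intro mult_left_mono) (auto simp: max_def)
  finally show ?thesis .
qed

lemma Lpw_diff:
  fixes f g :: "real \<Rightarrow> 'a::real_normed_vector"
  assumes "Lpw a b \<kappa> p f" "Lpw a b \<kappa> p g" "0 < p"
  shows "Lpw a b \<kappa> p (\<lambda>t. f t - g t)"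
proof -
  obtain r where r: "r \<in> borel_measurable lborel" "\<And>t. 0 \<le> r t"
    "AE t in lborel. t \<in> {a<..<b} \<longrightarrow> norm (f t) = r t"
    "(\<integral>\<^sup>+ t \<in> {a<..<b}. ennreal (\<bar>t\<bar> powr \<kappa> * r t powr p) \<partial>lborel)
       = (\<integral>\<^sup>+ t \<in> {a<..<b}. ennreal (\<bar>t\<bar> powr \<kappa> * norm (f t) powr p) \<partial>lborel)"
    using Lpw_borel[OF assms(1)] by blast
  obtain r' where r': "r' \<in> borel_measurable lborel" "\<And>t. 0 \<le> r' t"
    "AE t in lborel. t \<in> {a<..<b} \<longrightarrow> norm (g t) = r' t"
    "(\<integral>\<^sup>+ t \<in> {a<..<b}. ennreal (\<bar>t\<bar> powr \<kappa> * r' t powr p) \<partial>lborel)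
       = (\<integral>\<^sup>+ t \<in> {a<..<b}. ennreal (\<bar>t\<bar> powr \<kappa> * norm (g t) powr p) \<partial>lborel)"
    using Lpw_borel[OF assms(2)] by blast
  let ?A = "\<lambda>t. ennreal (\<bar>t\<bar> powr \<kappa> * r t powr p) * indicator {a<..<b} t"
  let ?B = "\<lambda>t. ennreal (\<bar>t\<bar> powr \<kappa> * r' t powr p) * indicator {a<..<b} t"
  have mA: "?A \<in> borel_measurable lborel" using r(1) by measurable
  have mB: "?B \<in> borel_measurable lborel" using r'(1) by measurable
  have "(\<integral>\<^sup>+ t \<in> {a<..<b}. ennreal (\<bar>t\<bar> powr \<kappa> * norm (f t - g t) powr p) \<partial>lborel)
      \<le> (\<integral>\<^sup>+ t. ennreal (2 powr p) * (?A t + ?B t) \<partial>lborel)"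
  proof (rule nn_integral_mono_AE)
    show "AE t in lborel. ennreal (\<bar>t\<bar> powr \<kappa> * norm (f t - g t) powr p) * indicator {a<..<b} t
        \<le> ennreal (2 powr p) * (?A t + ?B t)"
      using r(3) r'(3)
    proof eventually_elim
      case (elim t)
      show ?case
      proof (cases "t \<in> {a<..<b}")
        case True
        have "norm (f t - g t) powr p \<le> 2 powr p * (r t powr p + r' t powr p)"
          using elim True r(2)[of t] r'(2)[of t] assms(3) norm_triangle_ineq4[of "f t" "g t"]
          by (intro powr_sum_bound) auto
        then have "\<bar>t\<bar> powr \<kappa> * norm (f t - g t) powr p
            \<le> 2 powr p * (\<bar>t\<bar> powr \<kappa> * r t powr p + \<bar>t\<bar> powr \<kappa> * r' t powr p)"
          by (metis (no_types, opaque_lifting) distrib_left mult.left_commute mult_left_mono powr_ge_zero)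
        then show ?thesis using True
          by (simp add: ennreal_mult'[symmetric] ennreal_plus[symmetric] del: ennreal_plus)
      qed simp
    qed
  qed
  also have "\<dots> = ennreal (2 powr p) * ((\<integral>\<^sup>+ t. ?A t \<partial>lborel) + (\<integral>\<^sup>+ t. ?B t \<partial>lborel))"
    using mA mB by (simp add: nn_integral_cmult nn_integral_add)
  also have "\<dots> < \<infinity>"
    using assms(1,2) r(4) r'(4) unfolding Lpw_def
    by (simp add: ennreal_mult_less_top)
  finally show ?thesis using assms sm_diff unfolding Lpw_def by blast
qed

lemma Lpw_norm_zero:
  assumes "Lpw a b \<kappa> p f" "0 \<le> a" "0 < p" "Lpw_norm a b \<kappa> p f \<le> 0"
  shows "AE t in lborel. t \<in> {a<..<b} \<longrightarrow> f t = 0"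
proof -
  obtain r where r: "r \<in> borel_measurable lborel" "\<And>t. 0 \<le> r t"
    "AE t in lborel. t \<in> {a<..<b} \<longrightarrow> norm (f t) = r t"
    "(\<integral>\<^sup>+ t \<in> {a<..<b}. ennreal (\<bar>t\<bar> powr \<kappa> * r t powr p) \<partial>lborel)
       = (\<integral>\<^sup>+ t \<in> {a<..<b}. ennreal (\<bar>t\<bar> powr \<kappa> * norm (f t) powr p) \<partial>lborel)"
    using Lpw_borel[OF assms(1)] by blast
  let ?I = "\<integral>\<^sup>+ t \<in> {a<..<b}. ennreal (\<bar>t\<bar> powr \<kappa> * norm (f t) powr p) \<partial>lborel"
  have "Lpw_norm a b \<kappa> p f = 0" using assms(4) Lpw_norm_nonneg[of a b \<kappa> p f] by linarith
  then have "enn2real ?I = 0" unfolding Lpw_norm_def by simp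
  moreover have "?I < \<infinity>" using assms(1) unfolding Lpw_def by blast
  ultimately have "?I = 0" unfolding enn2real_eq_0_iff by auto
  then have "(\<integral>\<^sup>+ t. ennreal (\<bar>t\<bar> powr \<kappa> * r t powr p) * indicator {a<..<b} t \<partial>lborel) = 0"
    using r(4) by simp
  then have "AE t in lborel. ennreal (\<bar>t\<bar> powr \<kappa> * r t powr p) * indicator {a<..<b} t = 0"
    by (subst (asm) nn_integral_0_iff_AE) (use r(1) in measurable)
  then show ?thesis using r(3)
  proof eventually_elim
    case (elim t)
    show ?case
    proof
      assume t: "t \<in> {a<..<b}"
      then have "t > 0" using assms(2) by simp
      then have "r t powr p = 0" using elim t by (auto simp: indicator_def)
      then show "f t = 0" using elim t by simp
    qed
  qed
qed

lemma Lpw_locint: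
  assumes "Lpw a b \<kappa> p f" "1 \<le> p" "0 \<le> \<kappa>"
  obtains r where "r \<in> borel_measurable lborel" "\<And>t. 0 \<le> r t"
    "AE t in lborel. t \<in> {a<..<b} \<longrightarrow> norm (f t) = r t"
    "\<And>s t. 0 < s \<Longrightarrow> set_integrable lborel ({a<..<b} \<inter> {s..t}) r"
proof -
  obtain r where r: "r \<in> borel_measurable lborel" "\<And>t. 0 \<le> r t"
    "AE t in lborel. t \<in> {a<..<b} \<longrightarrow> norm (f t) = r t"
    "(\<integral>\<^sup>+ t \<in> {a<..<b}. ennreal (\<bar>t\<bar> powr \<kappa> * r t powr p) \<partial>lborel)
       = (\<integral>\<^sup>+ t \<in> {a<..<b}. ennreal (\<bar>t\<bar> powr \<kappa> * norm (f t) powr p) \<partial>lborel)"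
    using Lpw_borel[OF assms(1)] by blast
  have fin: "(\<integral>\<^sup>+ t \<in> {a<..<b}. ennreal (\<bar>t\<bar> powr \<kappa> * r t powr p) \<partial>lborel) < \<infinity>"
    using r(4) assms(1) unfolding Lpw_def by simp
  have "set_integrable lborel ({a<..<b} \<inter> {s..t}) r" if s: "0 < s" for s t
    unfolding set_integrable_def
  proof (rule integrableI_bounded)
    show "(\<lambda>x. indicator ({a<..<b} \<inter> {s..t}) x *\<^sub>R r x) \<in> borel_measurable lborel"
      using r(1) by measurable
    let ?A = "\<lambda>x. ennreal (indicator {s..t} x)"
    let ?B = "\<lambda>x. ennreal (\<bar>x\<bar> powr \<kappa> * r x powr p) * indicator {a<..<b} x"
    have "(\<integral>\<^sup>+ x. ennreal (norm (indicator ({a<..<b} \<inter> {s..t}) x *\<^sub>R r x)) \<partial>lborel)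
        \<le> (\<integral>\<^sup>+ x. ?A x + ennreal (s powr (-\<kappa>)) * ?B x \<partial>lborel)"
    proof (rule nn_integral_mono)
      fix x
      show "ennreal (norm (indicator ({a<..<b} \<inter> {s..t}) x *\<^sub>R r x)) \<le> ?A x + ennreal (s powr (-\<kappa>)) * ?B x"
      proof (cases "x \<in> {a<..<b} \<inter> {s..t}")
        case True
        then have x: "x \<ge> s" by auto
        have "r x \<le> 1 + r x powr p"
        proof (cases "r x \<le> 1")
          case False
          then have "r x powr 1 \<le> r x powr p" using assms(2) by (intro powr_mono) auto
          then show ?thesis using False by simp
        qed (use powr_ge_zero[of "r x" p] in linarith)
        also have "\<dots> \<le> 1 + s powr (-\<kappa>) * (\<bar>x\<bar> powr \<kappa> * r x powr p)"
        proof -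
          have "s powr (-\<kappa>) * \<bar>x\<bar> powr \<kappa> = \<bar>x\<bar> powr \<kappa> / s powr \<kappa>"
            by (simp add: powr_minus divide_inverse mult.commute)
          also have "\<dots> = (\<bar>x\<bar> / s) powr \<kappa>"
            using s x by (simp add: powr_divide)
          also have "\<dots> \<ge> 1" using s x assms(3) by (intro ge_one_powr_ge_zero) auto
          finally have "1 * r x powr p \<le> (s powr (-\<kappa>) * \<bar>x\<bar> powr \<kappa>) * r x powr p"
            by (intro mult_right_mono) auto
          then show ?thesis by (simp add: mult.assoc)
        qed
        finally have le: "r x \<le> 1 + s powr (-\<kappa>) * (\<bar>x\<bar> powr \<kappa> * r x powr p)" .
        have "ennreal (r x) \<le> ennreal (1 + s powr (-\<kappa>) * (\<bar>x\<bar> powr \<kappa> * r x powr p))"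
          by (rule ennreal_leI[OF le])
        also have "\<dots> = 1 + ennreal (s powr (-\<kappa>)) * ennreal (\<bar>x\<bar> powr \<kappa> * r x powr p)"
          by (simp add: ennreal_plus ennreal_mult)
        finally show ?thesis using True r(2)[of x] by simp
      qed simp
    qed
    also have "\<dots> = (\<integral>\<^sup>+ x. ?A x \<partial>lborel) + ennreal (s powr (-\<kappa>)) * (\<integral>\<^sup>+ x. ?B x \<partial>lborel)"
      using r(1) by (simp add: nn_integral_add nn_integral_cmult)
    also have "\<dots> < \<infinity>"
    proof -
      have "(\<integral>\<^sup>+ x. ?A x \<partial>lborel) = emeasure lborel {s..t}"
        by (simp add: ennreal_indicator)
      also have "\<dots> < \<infinity>" by (cases "s \<le> t") auto
      finally show ?thesis using fin by (simp add: ennreal_mult_less_top)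
    qed
    finally show "(\<integral>\<^sup>+ x. ennreal (norm (indicator ({a<..<b} \<inter> {s..t}) x *\<^sub>R r x)) \<partial>lborel) < \<infinity>" .
  qed
  then show ?thesis using that r by blast
qed

lemma smooth_cont: "smooth f \<Longrightarrow> continuous_on S f"
  using smoothD[of f 0] differentiable_imp_continuous_within
  by (auto intro!: continuous_at_imp_continuous_on)

lemma smooth_meas: "smooth f \<Longrightarrow> f \<in> borel_measurable lborel"
  using smooth_cont[of f UNIV] borel_measurable_continuous_onI by simp

lemma flat_meas[measurable]: "flat \<in> borel_measurable borel"
  using smooth_cont[OF smooth_flat, of UNIV] borel_measurable_continuous_onI by simp

lemma test_funI:
  assumes "smooth \<phi>" "a < c" "c \<le> d" "d < b" "\<And>t. t \<notin> {c..d} \<Longrightarrow> \<phi> t = 0"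
  shows "test_fun a b \<phi>"
  using assms unfolding test_fun_def smooth_def by blast

lemma test_fun_smooth: "test_fun a b \<phi> \<Longrightarrow> smooth \<phi>"
  unfolding test_fun_def smooth_def by blast

lemma prod_le_factor:
  fixes f :: "nat \<Rightarrow> real"
  assumes "finite I" "k \<in> I" "\<And>j. j \<in> I \<Longrightarrow> 0 \<le> f j \<and> f j \<le> 1"
  shows "(\<Prod>j\<in>I. f j) \<le> f k"
proof -
  have "(\<Prod>j\<in>I. f j) = f k * (\<Prod>j\<in>I - {k}. f j)"
    using assms by (simp add: prod.remove)
  also have "\<dots> \<le> f k * 1"
    using assms by (intro mult_left_mono prod_le_1) auto
  finally show ?thesis by simp
qed

lemma affine_smooth: "smooth (\<lambda>x. c * (x - e))"
  by (intro smooth_mult smooth_const smooth_diff smooth_id)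

lemma affine_smooth': "smooth (\<lambda>x. c * (e - x))"
  by (intro smooth_mult smooth_const smooth_diff smooth_id)

lemma scalar_open:
  fixes q :: "real \<Rightarrow> real"
  assumes qm: "q \<in> borel_measurable lborel"
    and qi: "set_integrable lborel {s..t} q"
    and ab: "a < s" "t < b"
    and H: "\<And>\<phi>. test_fun a b \<phi> \<Longrightarrow> (\<forall>x. 0 \<le> \<phi> x) \<Longrightarrow>
              integral\<^sup>L lborel (\<lambda>x. indicator {a<..<b} x * (\<phi> x * q x)) \<le> 0"
    and U: "open U" "U \<subseteq> {s<..<t}"
  shows "integral\<^sup>L lborel (\<lambda>x. indicator U x * q x) \<le> 0"
proof (cases "U = {}")
  case True
  then show ?thesis by simp
next
  case False
  obtain \<D> where D: "countable \<D>" "\<D> \<subseteq> Pow U" "\<And>X. X \<in> \<D> \<Longrightarrow> \<exists>a b. X = box a b" "\<Union>\<D> = U"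
    using open_countable_Union_open_box[OF U(1)] by blast
  then have Dne: "\<D> \<noteq> {}" using False by auto
  define B where "B = from_nat_into \<D>"
  have B: "B k \<in> \<D>" for k unfolding B_def using from_nat_into[OF Dne] by blast
  have "\<forall>k. \<exists>\<alpha> \<beta>. B k = box \<alpha> \<beta>" using D(3) B by blast
  then obtain \<alpha> \<beta> where AB: "\<And>k. B k = {\<alpha> k<..<\<beta> k}" by (metis box_real(1))
  have UB: "U = (\<Union>k. B k)" unfolding B_def using D(1,4) Dne by simp
  define fac where "fac n k x = 1 - flat (real n * (x - \<alpha> k)) * flat (real n * (\<beta> k - x))" for n k x
  define \<psi> where "\<psi> n x = 1 - (\<Prod>k<n. fac n k x)" for n x
  have fac01: "0 \<le> fac n k x \<and> fac n k x \<le> 1" for n k x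
    unfolding fac_def using flat_nonneg flat_le1
    by (auto intro!: mult_le_one mult_nonneg_nonneg)
  have prod01: "0 \<le> (\<Prod>k<n. fac n k x) \<and> (\<Prod>k<n. fac n k x) \<le> 1" for n x
    using fac01 by (auto intro!: prod_nonneg prod_le_1)
  have psi01: "0 \<le> \<psi> n x \<and> \<psi> n x \<le> 1" for n x
    unfolding \<psi>_def using prod01[of n x] by auto
  have psi0: "\<psi> n x = 0" if "x \<notin> U" for n x
  proof -
    have "fac n k x = 1" for k
    proof -
      have "x \<notin> B k" using that UB by blast
      then have "x \<le> \<alpha> k \<or> \<beta> k \<le> x" using AB by auto
      then have "flat (real n * (x - \<alpha> k)) = 0 \<or> flat (real n * (\<beta> k - x)) = 0"
        by (auto intro!: flat_zero mult_nonneg_nonpos)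
      then show ?thesis unfolding fac_def by auto
    qed
    then show ?thesis unfolding \<psi>_def by simp
  qed
  have smooth_psi: "smooth (\<psi> n)" for n
    unfolding \<psi>_def fac_def
    by (intro smooth_diff smooth_const smooth_prod smooth_mult smooth_comp[OF smooth_flat]
          affine_smooth affine_smooth')
  have st: "s \<le> t" using False U by auto
  have test: "test_fun a b (\<psi> n)" for n
  proof (rule test_funI[OF smooth_psi])
    fix x :: real assume "x \<notin> {s..t}"
    then have "x \<notin> U" using U by auto
    then show "\<psi> n x = 0" by (rule psi0)
  qed (use ab st in auto)
  have lim: "(\<lambda>n. \<psi> n x) \<longlonglongrightarrow> indicator U x" for x
  proof (cases "x \<in> U")
    case False
    then show ?thesis using psi0 by simp
  next
    case True
    then obtain k where k: "x \<in> B k" using UB by blast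
    then have xk: "\<alpha> k < x" "x < \<beta> k" using AB by auto
    have l1: "(\<lambda>n. flat (real n * (x - \<alpha> k) - 0) * flat (real n * (\<beta> k - x) - 0)) \<longlonglongrightarrow> 1 * 1"
      using xk by (intro tendsto_mult flat_seq) auto
    have "(\<lambda>n. \<psi> n x) \<longlonglongrightarrow> 1"
    proof (rule tendsto_sandwich[OF _ _ l1[simplified] tendsto_const])
      show "\<forall>\<^sub>F n in sequentially. flat (real n * (x - \<alpha> k)) * flat (real n * (\<beta> k - x)) \<le> \<psi> n x"
        unfolding eventually_sequentially
      proof (intro exI[of _ "Suc k"] allI impI)
        fix n assume "Suc k \<le> n"
        then have "(\<Prod>j<n. fac n j x) \<le> fac n k x"
          using fac01 by (intro prod_le_factor) auto
        then show "flat (real n * (x - \<alpha> k)) * flat (real n * (\<beta> k - x)) \<le> \<psi> n x"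
          unfolding \<psi>_def fac_def by simp
      qed
      show "\<forall>\<^sub>F n in sequentially. \<psi> n x \<le> 1" using psi01 by simp
    qed
    then show ?thesis using True by simp
  qed
  note qm[measurable]
  have Ub[measurable]: "U \<in> sets borel" using U(1) by (simp add: borel_open)
  have Uab: "U \<subseteq> {a<..<b}" using U ab by auto
  have Ust: "U \<subseteq> {s..t}" using U by auto
  have w: "integrable lborel (\<lambda>x. indicator {s..t} x * \<bar>q x\<bar>)"
    using integrable_abs[OF qi[unfolded set_integrable_def]] by (simp add: abs_mult)
  have conv: "(\<lambda>n. integral\<^sup>L lborel (\<lambda>x. indicator {a<..<b} x * (\<psi> n x * q x)))
      \<longlonglongrightarrow> integral\<^sup>L lborel (\<lambda>x. indicator U x * q x)"
  proof (rule integral_dominated_convergence[where w="\<lambda>x. indicator {s..t} x * \<bar>q x\<bar>"])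
    show "(\<lambda>x. indicator U x * q x) \<in> borel_measurable lborel"
      by measurable
    show "(\<lambda>x. indicator {a<..<b} x * (\<psi> n x * q x)) \<in> borel_measurable lborel" for n
      using qm smooth_meas[OF smooth_psi[of n]] by measurable
    show "integrable lborel (\<lambda>x. indicator {s..t} x * \<bar>q x\<bar>)" by (rule w)
    show "AE x in lborel. (\<lambda>n. indicator {a<..<b} x * (\<psi> n x * q x)) \<longlonglongrightarrow> indicator U x * q x"
    proof (intro AE_I2)
      fix x
      have "(\<lambda>n. indicator {a<..<b} x * (\<psi> n x * q x)) \<longlonglongrightarrow> indicator {a<..<b} x * (indicator U x * q x)"
        by (intro tendsto_mult tendsto_const lim)
      moreover have "indicator {a<..<b} x * (indicator U x * q x) = indicator U x * q x"
        using Uab by (auto simp: indicator_def)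
      ultimately show "(\<lambda>n. indicator {a<..<b} x * (\<psi> n x * q x)) \<longlonglongrightarrow> indicator U x * q x" by simp
    qed
    show "AE x in lborel. norm (indicator {a<..<b} x * (\<psi> n x * q x)) \<le> indicator {s..t} x * \<bar>q x\<bar>" for n
    proof (intro AE_I2)
      fix x
      show "norm (indicator {a<..<b} x * (\<psi> n x * q x)) \<le> indicator {s..t} x * \<bar>q x\<bar>"
      proof (cases "x \<in> U")
        case True
        then show ?thesis using Ust Uab psi01[of n x]
          by (auto simp: indicator_def abs_mult intro: mult_left_le_one_le)
      qed (simp add: psi0)
    qed
  qed
  have "integral\<^sup>L lborel (\<lambda>x. indicator {a<..<b} x * (\<psi> n x * q x)) \<le> 0" for n
    using H[OF test] psi01 by blast
  then show ?thesis using conv by (intro LIMSEQ_le_const2) auto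
qed

lemma scalar_interval:
  fixes q :: "real \<Rightarrow> real"
  assumes qm: "q \<in> borel_measurable lborel"
    and qi: "set_integrable lborel {s..t} q"
    and ab: "a < s" "t < b"
    and H: "\<And>\<phi>. test_fun a b \<phi> \<Longrightarrow> (\<forall>x. 0 \<le> \<phi> x) \<Longrightarrow>
              integral\<^sup>L lborel (\<lambda>x. indicator {a<..<b} x * (\<phi> x * q x)) \<le> 0"
  shows "AE x in lborel. x \<in> {s<..<t} \<longrightarrow> q x \<le> 0"
proof -
  note qm[measurable]
  define E where "E = {x. x \<in> {s<..<t} \<and> 0 < q x}"
  have Eb[measurable]: "E \<in> sets borel" unfolding E_def by measurable
  have "\<exists>T. open T \<and> E \<subseteq> T \<and> emeasure lborel (T - E) < ennreal (1 / Suc k)" for k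
    using outer_regular_lborel[OF Eb, of "1 / Suc k"] by auto
  then obtain T where T: "\<And>k. open (T k)" "\<And>k. E \<subseteq> T k" "\<And>k. emeasure lborel (T k - E) < ennreal (1 / Suc k)"
    by metis
  define V where "V k = {s<..<t} \<inter> (\<Inter>j\<le>k. T j)" for k
  have Vo: "open (V k)" for k unfolding V_def using T(1) by (intro open_Int open_INT) auto
  have Vst: "V k \<subseteq> {s<..<t}" for k unfolding V_def by auto
  have Est: "E \<subseteq> {s<..<t}" unfolding E_def by auto
  have EV: "E \<subseteq> V k" for k unfolding V_def using T(2) Est by auto
  have Vdec: "V k' \<subseteq> V k" if "k \<le> k'" for k k' unfolding V_def using that by auto
  define Vi where "Vi = (\<Inter>k. V k)"
  have Vb[measurable]: "V k \<in> sets borel" for k using Vo by (simp add: borel_open)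
  have Vib[measurable]: "Vi \<in> sets borel" unfolding Vi_def by measurable
  have int_le: "integral\<^sup>L lborel (\<lambda>x. indicator (V k) x * q x) \<le> 0" for k
    by (rule scalar_open[OF qm qi ab H Vo Vst]) auto
  have w: "integrable lborel (\<lambda>x. indicator {s..t} x * \<bar>q x\<bar>)"
    using integrable_abs[OF qi[unfolded set_integrable_def]] by (simp add: abs_mult)
  have conv: "(\<lambda>k. integral\<^sup>L lborel (\<lambda>x. indicator (V k) x * q x))
      \<longlonglongrightarrow> integral\<^sup>L lborel (\<lambda>x. indicator Vi x * q x)"
  proof (rule integral_dominated_convergence[where w="\<lambda>x. indicator {s..t} x * \<bar>q x\<bar>"])
    show "(\<lambda>x. indicator Vi x * q x) \<in> borel_measurable lborel" by measurable
    show "(\<lambda>x. indicator (V k) x * q x) \<in> borel_measurable lborel" for k by measurable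
    show "integrable lborel (\<lambda>x. indicator {s..t} x * \<bar>q x\<bar>)" by (rule w)
    show "AE x in lborel. (\<lambda>k. indicator (V k) x * q x) \<longlonglongrightarrow> indicator Vi x * q x"
    proof (intro AE_I2)
      fix x
      show "(\<lambda>k. indicator (V k) x * q x) \<longlonglongrightarrow> indicator Vi x * q x"
      proof (cases "x \<in> Vi")
        case True
        then have "\<And>k. x \<in> V k" unfolding Vi_def by blast
        then show ?thesis using True by simp
      next
        case False
        then obtain k0 where "x \<notin> V k0" unfolding Vi_def by blast
        then have "\<forall>k\<ge>k0. x \<notin> V k" using Vdec by blast
        then have "\<forall>\<^sub>F k in sequentially. indicator (V k) x * q x = indicator Vi x * q x"
          using False unfolding eventually_sequentially by (intro exI[of _ k0]) auto
        then show ?thesis by (rule tendsto_eventually)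
      qed
    qed
    show "AE x in lborel. norm (indicator (V k) x * q x) \<le> indicator {s..t} x * \<bar>q x\<bar>" for k
      using Vst[of k] by (intro AE_I2) (auto simp: indicator_def)
  qed
  have le0: "integral\<^sup>L lborel (\<lambda>x. indicator Vi x * q x) \<le> 0"
    using conv int_le by (intro LIMSEQ_le_const2) auto
  have null: "emeasure lborel (Vi - E) = 0"
  proof -
    have "emeasure lborel (Vi - E) \<le> 0"
    proof (rule ennreal_le_epsilon)
      fix e :: real assume "0 < e"
      then obtain k where k: "1 / Suc k < e"
        by (metis inverse_eq_divide of_nat_Suc reals_Archimedean)
      have "emeasure lborel (Vi - E) \<le> emeasure lborel (T k - E)"
      proof (rule emeasure_mono)
        show "Vi - E \<subseteq> T k - E" by (auto simp: Vi_def V_def)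
        have "T k \<in> sets borel" using T(1) by (simp add: borel_open)
        then show "T k - E \<in> sets lborel" using Eb by (simp add: sets.Diff)
      qed
      also have "\<dots> \<le> ennreal e"
      proof -
        have "ennreal (1 / Suc k) \<le> ennreal e" using k by (intro ennreal_leI) simp
        then show ?thesis using less_imp_le[OF T(3)[of k]] by (rule order.trans[rotated])
      qed
      finally show "emeasure lborel (Vi - E) \<le> 0 + ennreal e" by simp
    qed
    then show ?thesis by simp
  qed
  have "AE x in lborel. x \<notin> Vi - E"
    using null by (intro AE_not_in) (auto intro: null_setsI)
  then have "AE x in lborel. indicator Vi x * q x = indicator E x * q x"
    by eventually_elim (use EV in \<open>auto simp: Vi_def indicator_def\<close>)
  then have eq: "integral\<^sup>L lborel (\<lambda>x. indicator Vi x * q x) = integral\<^sup>L lborel (\<lambda>x. indicator E x * q x)"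
    by (intro integral_cong_AE) measurable
  have intE: "integrable lborel (\<lambda>x. indicator E x * q x)"
  proof -
    have "set_integrable lborel E q" by (rule set_integrable_subset[OF qi]) (use Est in auto)
    then show ?thesis unfolding set_integrable_def by simp
  qed
  have nonneg: "AE x in lborel. 0 \<le> indicator E x * q x"
    by (intro AE_I2) (auto simp: indicator_def E_def)
  have "integral\<^sup>L lborel (\<lambda>x. indicator E x * q x) = 0"
    using le0 eq integral_nonneg_AE[OF nonneg] by simp
  then have "AE x in lborel. indicator E x * q x = 0"
    using integral_nonneg_eq_0_iff_AE[OF intE nonneg] by simp
  then show ?thesis
    by eventually_elim (auto simp: indicator_def E_def split: if_splits)
qed

lemma scalar_dbr:
  fixes q :: "real \<Rightarrow> real"
  assumes qm: "q \<in> borel_measurable lborel"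
    and qi: "\<And>s t. a < s \<Longrightarrow> t < b \<Longrightarrow> set_integrable lborel {s..t} q"
    and H: "\<And>\<phi>. test_fun a b \<phi> \<Longrightarrow> (\<forall>x. 0 \<le> \<phi> x) \<Longrightarrow>
              integral\<^sup>L lborel (\<lambda>x. indicator {a<..<b} x * (\<phi> x * q x)) \<le> 0"
  shows "AE x in lborel. x \<in> {a<..<b} \<longrightarrow> q x \<le> 0"
proof (cases "a < b")
  case False
  then show ?thesis by simp
next
  case True
  define s where "s m = a + (b - a) / (real m + 3)" for m :: nat
  define t where "t m = b - (b - a) / (real m + 3)" for m :: nat
  have st: "a < s m" "t m < b" for m using True by (auto simp: s_def t_def)
  have "\<forall>m. AE x in lborel. x \<in> {s m<..<t m} \<longrightarrow> q x \<le> 0"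
    using scalar_interval[OF qm qi[OF st] st H] by blast
  then have "AE x in lborel. \<forall>m. x \<in> {s m<..<t m} \<longrightarrow> q x \<le> 0"
    using AE_all_countable[of "\<lambda>m x. x \<in> {s m<..<t m} \<longrightarrow> q x \<le> 0" lborel] by blast
  then show ?thesis
  proof eventually_elim
    case (elim x)
    show ?case
    proof
      assume x: "x \<in> {a<..<b}"
      define \<delta> where "\<delta> = min (x - a) (b - x)"
      have "\<delta> > 0" using x by (auto simp: \<delta>_def)
      then obtain m :: nat where "(b - a) / \<delta> < real m" using reals_Archimedean2 by blast
      then have "(b - a) / (real m + 3) < \<delta>"
        using \<open>\<delta> > 0\<close> True by (simp add: field_simps)
      then have "x \<in> {s m<..<t m}" by (auto simp: s_def t_def \<delta>_def)
      then show "q x \<le> 0" using elim by blast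
    qed
  qed
qed

lemma AE_negligible:
  assumes "AE x in lborel. P x"
  obtains N :: "real set" where "negligible N" "\<And>x. x \<notin> N \<Longrightarrow> P x"
proof -
  obtain N where N: "\<And>x. x \<in> space lborel - N \<Longrightarrow> P x" "N \<in> null_sets lborel"
    using AE_E3[OF assms] by blast
  have "negligible N" unfolding negligible_iff_null_sets using N(2) by (rule null_sets_completionI)
  then show ?thesis using that N(1) by auto
qed

lemma has_integral_AE_cong:
  fixes f g :: "real \<Rightarrow> 'a::banach"
  assumes "AE x in lborel. x \<in> S \<longrightarrow> f x = g x"
  shows "(f has_integral I) S \<longleftrightarrow> (g has_integral I) S"
proof -
  obtain N where N: "negligible N" "\<And>x. x \<notin> N \<Longrightarrow> x \<in> S \<longrightarrow> f x = g x"
    using AE_negligible[OF assms] by blast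
  show ?thesis by (rule has_integral_spike_eq[OF N(1)]) (use N(2) in auto)
qed

lemma integrable_AE_cong:
  fixes f g :: "real \<Rightarrow> 'a::banach"
  assumes "AE x in lborel. x \<in> S \<longrightarrow> f x = g x"
  shows "f integrable_on S \<longleftrightarrow> g integrable_on S"
  using has_integral_AE_cong[OF assms] unfolding integrable_on_def by blast

lemma integral_AE_cong:
  fixes f g :: "real \<Rightarrow> 'a::banach"
  assumes "AE x in lborel. x \<in> S \<longrightarrow> f x = g x"
  shows "integral S f = integral S g"
proof (cases "f integrable_on S")
  case True
  then have "(g has_integral integral S f) S" using has_integral_AE_cong[OF assms] by blast
  then show ?thesis by (simp add: integral_unique)
next
  case False
  then have "\<not> g integrable_on S" using integrable_AE_cong[OF assms] by blast
  then show ?thesis using False by (simp add: not_integrable_integral)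
qed

lemma has_integral_supp:
  fixes f :: "real \<Rightarrow> 'a::banach"
  assumes "S \<subseteq> T" "\<And>x. x \<in> T - S \<Longrightarrow> f x = 0"
  shows "(f has_integral I) S \<longleftrightarrow> (f has_integral I) T"
proof (rule has_integral_spike_set_eq)
  have "{x \<in> S - T. f x \<noteq> 0} = {}" "{x \<in> T - S. f x \<noteq> 0} = {}" using assms by auto
  then show "negligible {x \<in> S - T. f x \<noteq> 0}" "negligible {x \<in> T - S. f x \<noteq> 0}"
    by (simp_all only: negligible_empty)
qed

lemma has_integral_supp_neg:
  fixes f :: "real \<Rightarrow> 'a::banach"
  assumes "negligible N" "\<And>x. x \<in> T - S \<Longrightarrow> x \<notin> N \<Longrightarrow> f x = 0" "\<And>x. x \<in> S - T \<Longrightarrow> x \<notin> N \<Longrightarrow> f x = 0"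
  shows "(f has_integral I) S \<longleftrightarrow> (f has_integral I) T"
proof (rule has_integral_spike_set_eq)
  show "negligible {x \<in> S - T. f x \<noteq> 0}" using assms(3) by (intro negligible_subset[OF assms(1)]) auto
  show "negligible {x \<in> T - S. f x \<noteq> 0}" using assms(2) by (intro negligible_subset[OF assms(1)]) auto
qed

lemma deriv_zero_outside:
  fixes \<phi> :: "real \<Rightarrow> real"
  assumes "\<And>t. t \<notin> {c..d} \<Longrightarrow> \<phi> t = 0" "x \<notin> {c..d}"
  shows "deriv \<phi> x = 0"
proof -
  have xS: "x \<in> {..<c} \<union> {d<..}" using assms(2) by auto
  have d0: "((\<lambda>t. 0) has_real_derivative 0) (at x)" by simp
  have "(\<phi> has_real_derivative 0) (at x)"
  proof (rule has_field_derivative_transform_within_open[OF d0, of "{..<c} \<union> {d<..}"])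
    fix t assume "t \<in> {..<c} \<union> {d<..}"
    then have "t \<notin> {c..d}" by auto
    then show "0 = \<phi> t" using assms(1) by simp
  qed (use xS in auto)
  then show ?thesis by (rule DERIV_imp_deriv)
qed

lemma test_fun_supp:
  assumes "test_fun a b \<phi>"
  obtains c d where "a < c" "c \<le> d" "d < b" "\<And>t. t \<notin> {c..d} \<Longrightarrow> \<phi> t = 0"
  using assms unfolding test_fun_def by blast

lemma smooth_bounded:
  assumes "smooth \<phi>"
  obtains M where "\<And>x. x \<in> {c..d} \<Longrightarrow> \<bar>\<phi> x\<bar> \<le> M"
proof -
  have "compact (\<phi> ` {c..d})" by (intro compact_continuous_image smooth_cont[OF assms]) auto
  then have "bounded (\<phi> ` {c..d})" by (rule compact_imp_bounded)
  then obtain M where "\<forall>y \<in> \<phi> ` {c..d}. norm y \<le> M" unfolding bounded_iff by blast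
  then have "\<And>x. x \<in> {c..d} \<Longrightarrow> \<bar>\<phi> x\<bar> \<le> M" by auto
  then show ?thesis by (rule that)
qed

lemma wd_diff_zero:
  fixes g g1 g2 :: "real \<Rightarrow> 'a::banach"
  assumes "weak_deriv a b g g1" "weak_deriv a b g g2" "test_fun a b \<phi>"
  shows "((\<lambda>t. \<phi> t *\<^sub>R (g1 t - g2 t)) has_integral 0) {a<..<b}"
proof -
  obtain I1 where I1: "((\<lambda>t. deriv \<phi> t *\<^sub>R g t) has_integral - I1) {a<..<b}"
      "((\<lambda>t. \<phi> t *\<^sub>R g1 t) has_integral I1) {a<..<b}"
    using assms(1,3) unfolding weak_deriv_def by blast
  obtain I2 where I2: "((\<lambda>t. deriv \<phi> t *\<^sub>R g t) has_integral - I2) {a<..<b}"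
      "((\<lambda>t. \<phi> t *\<^sub>R g2 t) has_integral I2) {a<..<b}"
    using assms(2,3) unfolding weak_deriv_def by blast
  have "- I1 = - I2" using I1(1) I2(1) by (rule has_integral_unique)
  then have "I1 = I2" by simp
  then show ?thesis using has_integral_diff[OF I1(2) I2(2)] by (simp add: scaleR_diff_right)
qed

lemma si_test:
  fixes f :: "real \<Rightarrow> real"
  assumes "smooth \<phi>" "\<And>t. t \<notin> {c..d} \<Longrightarrow> \<phi> t = 0" "{c..d} \<subseteq> S" "S \<in> sets lborel"
    and fm: "f \<in> borel_measurable lborel" and fi: "set_integrable lborel {c..d} f"
  shows "set_integrable lborel S (\<lambda>x. \<phi> x * f x)"
proof -
  obtain M where M: "\<And>x. x \<in> {c..d} \<Longrightarrow> \<bar>\<phi> x\<bar> \<le> M" using smooth_bounded[OF assms(1)] by blast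
  have im: "integrable lborel (\<lambda>x. M * (indicator {c..d} x * f x))"
    using fi unfolding set_integrable_def by simp
  note fm[measurable] smooth_meas[OF assms(1), measurable]
  show ?thesis unfolding set_integrable_def
  proof (rule Bochner_Integration.integrable_bound[OF im])
    show "(\<lambda>x. indicat_real S x *\<^sub>R (\<phi> x * f x)) \<in> borel_measurable lborel"
      using assms(4) by measurable
    show "AE x in lborel. norm (indicat_real S x *\<^sub>R (\<phi> x * f x)) \<le> norm (M * (indicat_real {c..d} x * f x))"
    proof (intro AE_I2)
      fix x
      show "norm (indicat_real S x *\<^sub>R (\<phi> x * f x)) \<le> norm (M * (indicat_real {c..d} x * f x))"
      proof (cases "x \<in> {c..d}")
        case True
        then have "\<bar>\<phi> x\<bar> * \<bar>f x\<bar> \<le> \<bar>M\<bar> * \<bar>f x\<bar>" using M[of x] by (intro mult_right_mono) auto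
        then show ?thesis using True assms(3) by (auto simp: abs_mult)
      qed (simp add: assms(2))
    qed
  qed
qed

lemma si_const:
  fixes c d :: real
  shows "set_integrable lborel {c..d} (\<lambda>x. 1::real)"
  unfolding set_integrable_def
proof -
  have "emeasure lborel {c..d} < \<infinity>" by (cases "c \<le> d") auto
  then have "integrable lborel (indicat_real {c..d})" by (intro integrable_real_indicator) auto
  then show "integrable lborel (\<lambda>x. indicat_real {c..d} x *\<^sub>R (1::real))" by simp
qed

lemma wd_unique:
  fixes g g1 g2 :: "real \<Rightarrow> 'a::banach"
  assumes wd1: "weak_deriv a b g g1" and wd2: "weak_deriv a b g g2"
    and L1: "Lpw a b \<kappa> p g1" and L2: "Lpw a b \<kappa> p g2"
    and a0: "0 \<le> a" and p1: "1 \<le> p" and k0: "0 \<le> \<kappa>"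
  shows "AE t in lborel. t \<in> {a<..<b} \<longrightarrow> g1 t = g2 t"
proof -
  define d where "d t = g1 t - g2 t" for t
  obtain r1 where r1: "r1 \<in> borel_measurable lborel" "\<And>t. 0 \<le> r1 t"
    "AE t in lborel. t \<in> {a<..<b} \<longrightarrow> norm (g1 t) = r1 t"
    "\<And>s t. 0 < s \<Longrightarrow> set_integrable lborel ({a<..<b} \<inter> {s..t}) r1"
    using Lpw_locint[OF L1 p1 k0] by blast
  obtain r2 where r2: "r2 \<in> borel_measurable lborel" "\<And>t. 0 \<le> r2 t"
    "AE t in lborel. t \<in> {a<..<b} \<longrightarrow> norm (g2 t) = r2 t"
    "\<And>s t. 0 < s \<Longrightarrow> set_integrable lborel ({a<..<b} \<inter> {s..t}) r2"
    using Lpw_locint[OF L2 p1 k0] by blast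
  have smd: "strongly_measurable_on {a<..<b} d"
    unfolding d_def using L1 L2 unfolding Lpw_def by (intro sm_diff) auto
  obtain C where C: "countable C" "AE t in lborel. t \<in> {a<..<b} \<longrightarrow> d t \<in> closure C"
    using sm_sep[OF smd] by blast
  have "\<exists>r. r \<in> borel_measurable lborel \<and> (AE t in lborel. t \<in> {a<..<b} \<longrightarrow> norm y - norm (y - d t) = r t)" for y
  proof -
    have "continuous_on UNIV (\<lambda>z. norm y - norm (y - z))" by (intro continuous_intros)
    from sm_real[OF smd this] show ?thesis by blast
  qed
  then have "\<forall>y. \<exists>r. r \<in> borel_measurable lborel \<and> (AE t in lborel. t \<in> {a<..<b} \<longrightarrow> norm y - norm (y - d t) = r t)"
    by blast
  then obtain R where R0: "\<forall>y. R y \<in> borel_measurable lborel \<and> (AE t in lborel. t \<in> {a<..<b} \<longrightarrow> norm y - norm (y - d t) = R y t)"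
    by (rule choice[THEN exE])
  then have R: "\<And>y. R y \<in> borel_measurable lborel"
    "\<And>y. AE t in lborel. t \<in> {a<..<b} \<longrightarrow> norm y - norm (y - d t) = R y t"
    by blast+
  have loc: "set_integrable lborel {s..t} (R y)" if st: "a < s" "t < b" for y s t
  proof -
    have eq: "{a<..<b} \<inter> {s..t} = {s..t}" using st by auto
    have s0: "0 < s" using st a0 by linarith
    have i1: "integrable lborel (\<lambda>x. indicator {s..t} x * r1 x)"
      using r1(4)[OF s0, of t] unfolding set_integrable_def eq by simp
    have i2: "integrable lborel (\<lambda>x. indicator {s..t} x * r2 x)"
      using r2(4)[OF s0, of t] unfolding set_integrable_def eq by simp
    have i: "integrable lborel (\<lambda>x. indicator {s..t} x * (r1 x + r2 x))"
      using Bochner_Integration.integrable_add[OF i1 i2] by (simp add: distrib_left)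
    note R(1)[of y, measurable]
    show ?thesis unfolding set_integrable_def
    proof (rule Bochner_Integration.integrable_bound[OF i])
      show "(\<lambda>x. indicat_real {s..t} x *\<^sub>R R y x) \<in> borel_measurable lborel" by measurable
      show "AE x in lborel. norm (indicat_real {s..t} x *\<^sub>R R y x) \<le> norm (indicat_real {s..t} x * (r1 x + r2 x))"
        using R(2)[of y] r1(3) r2(3)
      proof eventually_elim
        case (elim x)
        show ?case
        proof (cases "x \<in> {s..t}")
          case True
          then have x: "x \<in> {a<..<b}" using st by auto
          have "\<bar>R y x\<bar> = \<bar>norm y - norm (y - d x)\<bar>" using elim x by simp
          also have "\<dots> \<le> norm (d x)" using norm_triangle_ineq3[of y "y - d x"] by simp
          also have "\<dots> \<le> norm (g1 x) + norm (g2 x)" unfolding d_def by (rule norm_triangle_ineq4)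
          also have "\<dots> = r1 x + r2 x" using elim x by simp
          finally show ?thesis using True r1(2)[of x] r2(2)[of x] by simp
        qed simp
      qed
    qed
  qed
  have Hy: "integral\<^sup>L lborel (\<lambda>x. indicator {a<..<b} x * (\<phi> x * R y x)) \<le> 0"
    if \<phi>: "test_fun a b \<phi>" "\<forall>x. 0 \<le> \<phi> x" for \<phi> y
  proof -
    obtain c e where ce: "a < c" "c \<le> e" "e < b" "\<And>t. t \<notin> {c..e} \<Longrightarrow> \<phi> t = 0"
      using test_fun_supp[OF \<phi>(1)] by blast
    have sm: "smooth \<phi>" using \<phi>(1) by (rule test_fun_smooth)
    have sub: "{c..e} \<subseteq> {a<..<b}" using ce by auto
    have ab_sets: "{a<..<b} \<in> sets lborel" by simp
    have h1: "((\<lambda>t. \<phi> t *\<^sub>R d t) has_integral 0) {a<..<b}"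
      unfolding d_def by (rule wd_diff_zero[OF wd1 wd2 \<phi>(1)])
    have phi_int_ce: "(\<phi> has_integral integral {c..e} \<phi>) {c..e}"
      using integrable_continuous_interval[OF smooth_cont[OF sm]] by blast
    have phi_int: "(\<phi> has_integral integral {c..e} \<phi>) {a<..<b}"
      using phi_int_ce has_integral_supp[OF sub, of \<phi>] ce(4) by auto
    define I\<phi> where "I\<phi> = integral {c..e} \<phi>"
    have h2: "((\<lambda>t. \<phi> t *\<^sub>R y) has_integral I\<phi> *\<^sub>R y) {a<..<b}"
      unfolding I\<phi>_def by (rule has_integral_scaleR_left[OF phi_int])
    have h3: "((\<lambda>t. \<phi> t *\<^sub>R (y - d t)) has_integral I\<phi> *\<^sub>R y) {a<..<b}"
      using has_integral_diff[OF h2 h1] by (simp add: scaleR_diff_right)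
    note R(1)[of y, measurable]
    have siR: "set_integrable lborel {a<..<b} (\<lambda>x. \<phi> x * R y x)"
      by (rule si_test[OF sm ce(4) sub ab_sets R(1) loc[OF ce(1) ce(3)]])
    have si1: "set_integrable lborel {a<..<b} (\<lambda>x. \<phi> x * 1)"
      by (rule si_test[OF sm ce(4) sub ab_sets borel_measurable_const si_const])
    have hkR: "(\<lambda>x. \<phi> x * R y x) integrable_on {a<..<b}"
      "(LINT x:{a<..<b}|lborel. \<phi> x * R y x) = integral {a<..<b} (\<lambda>x. \<phi> x * R y x)"
      using set_borel_integral_eq_integral[OF siR] by auto
    have hk1: "\<phi> integrable_on {a<..<b}" "integral {a<..<b} \<phi> = I\<phi>"
      using phi_int unfolding I\<phi>_def by (auto simp: integral_unique)
    have ae: "AE x in lborel. x \<in> {a<..<b} \<longrightarrow> \<phi> x * (norm y - R y x) = \<phi> x * norm (y - d x)"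
      using R(2)[of y] by eventually_elim auto
    have e_int: "(\<lambda>x. \<phi> x * (norm y - R y x)) integrable_on {a<..<b}"
      using hk1(1) hkR(1) by (simp add: right_diff_distrib integrable_diff integrable_on_mult_left)
    have e_val: "integral {a<..<b} (\<lambda>x. \<phi> x * (norm y - R y x)) = norm y * I\<phi> - integral {a<..<b} (\<lambda>x. \<phi> x * R y x)"
    proof -
      have "integral {a<..<b} (\<lambda>x. \<phi> x * (norm y - R y x)) = integral {a<..<b} (\<lambda>x. \<phi> x * norm y - \<phi> x * R y x)"
        by (simp add: right_diff_distrib)
      also have "\<dots> = integral {a<..<b} (\<lambda>x. \<phi> x * norm y) - integral {a<..<b} (\<lambda>x. \<phi> x * R y x)"
        by (rule integral_diff) (use hk1(1) hkR(1) in \<open>auto intro: integrable_on_mult_left\<close>)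
      also have "integral {a<..<b} (\<lambda>x. \<phi> x * norm y) = norm y * I\<phi>"
        using hk1 by (simp add: mult.commute)
      finally show ?thesis .
    qed
    have n_int: "(\<lambda>x. \<phi> x * norm (y - d x)) integrable_on {a<..<b}"
      using e_int integrable_AE_cong[OF ae] by blast
    have n_val: "integral {a<..<b} (\<lambda>x. \<phi> x * norm (y - d x)) = norm y * I\<phi> - integral {a<..<b} (\<lambda>x. \<phi> x * R y x)"
      using e_val integral_AE_cong[OF ae] by simp
    have "norm (I\<phi> *\<^sub>R y) \<le> integral {a<..<b} (\<lambda>x. \<phi> x * norm (y - d x))"
    proof -
      have "norm (integral {a<..<b} (\<lambda>t. \<phi> t *\<^sub>R (y - d t))) \<le> integral {a<..<b} (\<lambda>x. \<phi> x * norm (y - d x))"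
        by (rule integral_norm_bound_integral) (use h3 n_int \<phi>(2) in auto)
      then show ?thesis using h3 by (simp add: integral_unique)
    qed
    moreover have "I\<phi> * norm y \<le> norm (I\<phi> *\<^sub>R y)" by (simp add: mult_right_mono)
    ultimately have "integral {a<..<b} (\<lambda>x. \<phi> x * R y x) \<le> 0" using n_val by (simp add: mult.commute)
    then show ?thesis using hkR(2) by (simp add: set_lebesgue_integral_def)
  qed
  have AEy: "AE t in lborel. t \<in> {a<..<b} \<longrightarrow> R y t \<le> 0" for y
    by (rule scalar_dbr[OF R(1) loc Hy])
  have "AE t in lborel. \<forall>y\<in>C. t \<in> {a<..<b} \<longrightarrow> R y t \<le> 0 \<and> norm y - norm (y - d t) = R y t"
  proof (subst AE_ball_countable[OF C(1)], intro ballI)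
    fix y assume "y \<in> C"
    show "AE t in lborel. t \<in> {a<..<b} \<longrightarrow> R y t \<le> 0 \<and> norm y - norm (y - d t) = R y t"
      using AEy[of y] R(2)[of y] by eventually_elim auto
  qed
  then have "AE t in lborel. t \<in> {a<..<b} \<longrightarrow> d t = 0"
    using C(2)
  proof eventually_elim
    case (elim t)
    show ?case
    proof
      assume t: "t \<in> {a<..<b}"
      then have dC: "d t \<in> closure C" using elim by blast
      have le: "norm y \<le> norm (y - d t)" if "y \<in> C" for y
      proof -
        have "R y t \<le> 0 \<and> norm y - norm (y - d t) = R y t" using elim t that by blast
        then show ?thesis by linarith
      qed
      obtain ys where ys: "\<And>n. ys n \<in> C" "ys \<longlonglongrightarrow> d t"
        using dC unfolding closure_sequential by blast
      have l1: "(\<lambda>n. norm (ys n)) \<longlonglongrightarrow> norm (d t)" using ys(2) by (rule tendsto_norm)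
      have l2: "(\<lambda>n. norm (ys n - d t)) \<longlonglongrightarrow> norm (d t - d t)"
        using ys(2) by (intro tendsto_norm tendsto_diff tendsto_const)
      have ev: "\<forall>\<^sub>F n in sequentially. norm (ys n) \<le> norm (ys n - d t)" using le ys(1) by simp
      have "norm (d t) \<le> norm (d t - d t)" by (rule tendsto_le[OF trivial_limit_sequentially l2 l1 ev])
      then show "d t = 0" by simp
    qed
  qed
  then show ?thesis by eventually_elim (auto simp: d_def)
qed

lemma hk_approx_AE:
  fixes f :: "real \<Rightarrow> 'a::banach" and g :: "nat \<Rightarrow> real \<Rightarrow> 'a" and e :: "nat \<Rightarrow> real \<Rightarrow> real"
  assumes gi: "\<And>n. g n integrable_on {c..d}" and ei: "\<And>n. e n integrable_on {c..d}"
    and N: "negligible N"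
    and le: "\<And>n x. x \<in> {c..d} \<Longrightarrow> x \<notin> N \<Longrightarrow> norm (f x - g n x) \<le> e n x"
    and lim: "(\<lambda>n. integral {c..d} (e n)) \<longlonglongrightarrow> 0"
  shows "f integrable_on {c..d}" "(\<lambda>n. integral {c..d} (g n)) \<longlonglongrightarrow> integral {c..d} f"
proof -
  define e' where "e' n x = (if x \<in> N then norm (f x - g n x) else e n x)" for n x
  have e'i: "e' n integrable_on {c..d}" for n
    by (rule integrable_spike[OF ei N]) (auto simp: e'_def)
  have e'v: "integral {c..d} (e' n) = integral {c..d} (e n)" for n
    by (rule integral_spike[OF N]) (auto simp: e'_def)
  have le': "norm (f x - g n x) \<le> e' n x" if "x \<in> {c..d}" for n x
    using le[OF that] by (auto simp: e'_def)
  show "f integrable_on {c..d}" "(\<lambda>n. integral {c..d} (g n)) \<longlonglongrightarrow> integral {c..d} f"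
    using hk_approx[OF gi e'i le'] lim by (auto simp: e'v)
qed

lemma hk_dct_real:
  fixes e :: "nat \<Rightarrow> real \<Rightarrow> real" and w :: "real \<Rightarrow> real"
  assumes em: "\<And>n. e n \<in> borel_measurable lborel"
    and wi: "set_integrable lborel {c..d} w"
    and le: "\<And>n x. x \<in> {c..d} \<Longrightarrow> \<bar>e n x\<bar> \<le> w x"
    and lim: "AE x in lborel. x \<in> {c..d} \<longrightarrow> (\<lambda>n. e n x) \<longlonglongrightarrow> 0"
  shows "\<And>n. e n integrable_on {c..d}" "(\<lambda>n. integral {c..d} (e n)) \<longlonglongrightarrow> 0"
proof -
  note em[measurable]
  have wi': "integrable lborel (\<lambda>x. indicator {c..d} x * w x)" using wi by (simp add: set_integrable_def)
  have si: "set_integrable lborel {c..d} (e n)" for n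
    unfolding set_integrable_def
  proof (rule Bochner_Integration.integrable_bound[OF wi'])
    show "(\<lambda>x. indicat_real {c..d} x *\<^sub>R e n x) \<in> borel_measurable lborel" by measurable
    show "AE x in lborel. norm (indicat_real {c..d} x *\<^sub>R e n x) \<le> norm (indicat_real {c..d} x * w x)"
    proof (intro AE_I2)
      fix x
      show "norm (indicat_real {c..d} x *\<^sub>R e n x) \<le> norm (indicat_real {c..d} x * w x)"
      proof (cases "x \<in> {c..d}")
        case True
        then have "\<bar>e n x\<bar> \<le> w x" by (rule le)
        then show ?thesis using True by simp
      qed simp
    qed
  qed
  show "e n integrable_on {c..d}" for n using set_borel_integral_eq_integral(1)[OF si] .
  have m1: "(\<lambda>x::real. 0::real) \<in> borel_measurable lborel" by simp
  have m2: "(\<lambda>x. indicator {c..d} x * e n x) \<in> borel_measurable lborel" for n by measurable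
  have l2: "AE x in lborel. (\<lambda>n. indicator {c..d} x * e n x) \<longlonglongrightarrow> 0"
    using lim by eventually_elim (auto simp: indicator_def)
  have b2: "AE x in lborel. norm (indicator {c..d} x * e n x) \<le> indicator {c..d} x * w x" for n
    using le by (intro AE_I2) (auto simp: indicator_def)
  have "(\<lambda>n. integral\<^sup>L lborel (\<lambda>x. indicator {c..d} x * e n x)) \<longlonglongrightarrow> integral\<^sup>L lborel (\<lambda>x::real. 0::real)"
    by (rule integral_dominated_convergence[OF m1 m2 wi' l2 b2])
  moreover have "integral\<^sup>L lborel (\<lambda>x. indicator {c..d} x * e n x) = integral {c..d} (e n)" for n
    using set_borel_integral_eq_integral(2)[OF si[of n]] by (simp add: set_lebesgue_integral_def)
  ultimately show "(\<lambda>n. integral {c..d} (e n)) \<longlonglongrightarrow> 0" by simp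
qed

definition cutoff :: "real \<Rightarrow> nat \<Rightarrow> real \<Rightarrow> real" where
  "cutoff a m t = flat (real m * (t - a) - 1)"

lemma cutoff_smooth: "smooth (cutoff a m)"
  unfolding cutoff_def by (intro smooth_comp[OF smooth_flat] smooth_diff smooth_mult smooth_const smooth_id)

lemma cutoff_01: "0 \<le> cutoff a m t" "cutoff a m t \<le> 1"
  unfolding cutoff_def using flat_nonneg flat_le1 by auto

lemma cutoff_zero: "t \<le> a + 1 / real m \<Longrightarrow> 0 < m \<Longrightarrow> cutoff a m t = 0"
  unfolding cutoff_def by (intro flat_zero) (simp add: field_simps)

lemma cutoff_deriv:
  "(cutoff a m has_real_derivative real m * deriv flat (real m * (t - a) - 1)) (at t)"
proof -
  have "(flat has_real_derivative deriv flat (real m * (t - a) - 1)) (at (real m * (t - a) - 1))"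
    using smoothD[OF smooth_flat, of 0] by (simp add: DERIV_deriv_iff_real_differentiable)
  moreover have "((\<lambda>t. real m * (t - a) - 1) has_real_derivative real m) (at t)"
    by (auto intro!: derivative_eq_intros)
  ultimately have "((\<lambda>t. flat (real m * (t - a) - 1)) has_real_derivative deriv flat (real m * (t - a) - 1) * real m) (at t)"
    by (rule DERIV_chain2)
  then show ?thesis unfolding cutoff_def by (simp add: mult.commute)
qed

lemma deriv_cutoff: "deriv (cutoff a m) t = real m * deriv flat (real m * (t - a) - 1)"
  using cutoff_deriv DERIV_imp_deriv by blast

lemma deriv_cutoff_nonneg: "0 \<le> deriv (cutoff a m) t"
  by (simp add: deriv_cutoff deriv_flat_nonneg)

lemma cont_deriv_cutoff: "continuous_on S (deriv (cutoff a m))"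
  unfolding deriv_cutoff
  by (intro continuous_intros continuous_on_compose2[OF continuous_deriv_flat, of _ "\<lambda>t. real m * (t - a) - 1"]) auto

lemma cont_cutoff: "continuous_on S (cutoff a m)"
  using smooth_cont[OF cutoff_smooth] .

lemma cutoff_lim:
  assumes "t > a"
  shows "(\<lambda>n. cutoff a (n + K) t) \<longlonglongrightarrow> 1"
proof -
  have "filterlim (\<lambda>n. real (n + K) * (t - a) - 1) at_top sequentially"
    using assms by real_asymp
  from filterlim_compose[OF flat_at_top this] show ?thesis by (simp add: cutoff_def)
qed

lemma cutoff_ftc:
  assumes "u \<le> v"
  shows "(deriv (cutoff a m) has_integral (cutoff a m v - cutoff a m u)) {u..v}"
proof (rule fundamental_theorem_of_calculus[OF assms])
  fix x
  show "(cutoff a m has_vector_derivative deriv (cutoff a m) x) (at x within {u..v})"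
    using cutoff_deriv[of a m x] unfolding deriv_cutoff[symmetric]
    by (simp add: has_real_derivative_iff_has_vector_derivative[symmetric] has_field_derivative_at_within)
qed

lemma cont_bounded:
  fixes k :: "real \<Rightarrow> real"
  assumes "continuous_on {a..e} k"
  obtains K where "0 \<le> K" "\<And>t. t \<in> {a..e} \<Longrightarrow> \<bar>k t\<bar> \<le> K"
proof -
  have "compact (k ` {a..e})" by (intro compact_continuous_image assms) auto
  then have "bounded (k ` {a..e})" by (rule compact_imp_bounded)
  then obtain K where "\<forall>y \<in> k ` {a..e}. norm y \<le> K" unfolding bounded_iff by blast
  then have "\<And>t. t \<in> {a..e} \<Longrightarrow> \<bar>k t\<bar> \<le> max 0 K" by force
  then show ?thesis using that[of "max 0 K"] by auto
qed

lemma cutoff_small: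
  fixes k :: "real \<Rightarrow> real"
  assumes kc: "continuous_on {a..e} k" and ka: "k a = 0" and ae: "a < e"
    and k0: "\<And>t. t \<in> {a..e} \<Longrightarrow> 0 \<le> k t"
  shows "(\<lambda>n. integral {a..e} (\<lambda>t. deriv (cutoff a (n + K)) t * k t)) \<longlonglongrightarrow> 0"
proof -
  let ?\<chi> = "\<lambda>n. cutoff a (n + K)"
  let ?d = "\<lambda>n. deriv (cutoff a (n + K))"
  have int: "(\<lambda>t. ?d n t * k t) integrable_on {u..v}" if "{u..v} \<subseteq> {a..e}" for n u v
    by (rule integrable_continuous_interval)
       (intro continuous_intros continuous_on_subset[OF kc that] cont_deriv_cutoff)
  have intd: "?d n integrable_on {u..v}" for n u v
    by (rule integrable_continuous_interval) (rule cont_deriv_cutoff)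
  obtain K2 where K2: "0 \<le> K2" "\<And>t. t \<in> {a..e} \<Longrightarrow> \<bar>k t\<bar> \<le> K2" using cont_bounded[OF kc] by blast
  have kle: "k t \<le> K2" if "t \<in> {a..e}" for t using K2(2)[OF that] by linarith
  show ?thesis unfolding LIMSEQ_iff
  proof (intro allI impI)
    fix r :: real assume "0 < r"
    define \<eta> where "\<eta> = r / 3"
    have "\<eta> > 0" using \<open>0 < r\<close> by (simp add: \<eta>_def)
    obtain \<delta> where \<delta>: "\<delta> > 0" "\<And>x'. x' \<in> {a..e} \<Longrightarrow> dist x' a < \<delta> \<Longrightarrow> dist (k x') (k a) < \<eta>"
      using kc[unfolded continuous_on_iff] ae \<open>\<eta> > 0\<close> by (meson atLeastAtMost_iff order.refl less_imp_le)
    define \<delta>' where "\<delta>' = min (\<delta>/2) ((e - a)/2)"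
    have \<delta>': "0 < \<delta>'" "a + \<delta>' < e" "\<delta>' < \<delta>" using \<delta>(1) ae unfolding \<delta>'_def min_def by (auto simp: field_simps)
    have ksmall: "k t \<le> \<eta>" if "t \<in> {a..a + \<delta>'}" for t
      using \<delta>(2)[of t] that \<delta>' ka by (auto simp: dist_real_def)
    have "(\<lambda>n. ?\<chi> n (a + \<delta>')) \<longlonglongrightarrow> 1" using \<delta>'(1) by (intro cutoff_lim) simp
    then have "\<forall>\<^sub>F n in sequentially. dist (?\<chi> n (a + \<delta>')) 1 < \<eta> / (K2 + 1)"
      using \<open>\<eta> > 0\<close> K2(1) by (intro tendstoD) auto
    then obtain N where N: "\<And>n. n \<ge> N \<Longrightarrow> dist (?\<chi> n (a + \<delta>')) 1 < \<eta> / (K2 + 1)"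
      unfolding eventually_sequentially by blast
    show "\<exists>no. \<forall>n\<ge>no. norm (integral {a..e} (\<lambda>t. ?d n t * k t) - 0) < r"
    proof (intro exI allI impI)
      fix n assume "N \<le> n"
      have d0: "0 \<le> ?d n t" for t by (rule deriv_cutoff_nonneg)
      have split: "integral {a..e} (\<lambda>t. ?d n t * k t)
          = integral {a..a+\<delta>'} (\<lambda>t. ?d n t * k t) + integral {a+\<delta>'..e} (\<lambda>t. ?d n t * k t)"
        using Henstock_Kurzweil_Integration.integral_combine[where a=a and c="a+\<delta>'" and b=e and f="\<lambda>t. ?d n t * k t"] int[of a e n] \<delta>' by auto
      have p1: "integral {a..a+\<delta>'} (\<lambda>t. ?d n t * k t) \<le> integral {a..a+\<delta>'} (\<lambda>t. ?d n t * \<eta>)"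
        using \<delta>' ksmall d0 by (intro integral_le int integrable_on_mult_left intd) (auto intro: mult_left_mono)
      also have "\<dots> = (?\<chi> n (a+\<delta>') - ?\<chi> n a) * \<eta>"
        using cutoff_ftc[of a "a+\<delta>'" a "n+K"] \<delta>' by (simp add: integral_unique has_integral_mult_left)
      also have "\<dots> \<le> \<eta>"
        using cutoff_01[of a "n+K" "a+\<delta>'"] \<open>\<eta> > 0\<close> flat_zero[of "-1"]
        by (intro mult_left_le_one_le) (auto simp: cutoff_def)
      finally have p1: "integral {a..a+\<delta>'} (\<lambda>t. ?d n t * k t) \<le> \<eta>" .
      have p2: "integral {a+\<delta>'..e} (\<lambda>t. ?d n t * k t) \<le> integral {a+\<delta>'..e} (\<lambda>t. ?d n t * K2)"
        using \<delta>' kle d0 by (intro integral_le int integrable_on_mult_left intd) (auto intro: mult_left_mono)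
      also have "\<dots> = (?\<chi> n e - ?\<chi> n (a+\<delta>')) * K2"
        using cutoff_ftc[of "a+\<delta>'" e a "n+K"] \<delta>' by (simp add: integral_unique has_integral_mult_left)
      also have "\<dots> \<le> (1 - ?\<chi> n (a+\<delta>')) * K2"
        using cutoff_01[of a "n+K" e] K2(1) by (intro mult_right_mono) auto
      also have "\<dots> \<le> \<eta> / (K2 + 1) * K2"
        using N[OF \<open>N \<le> n\<close>] K2(1) cutoff_01[of a "n+K" "a+\<delta>'"]
        by (intro mult_right_mono) (auto simp: dist_real_def)
      also have "\<dots> \<le> \<eta>"
        using K2(1) \<open>\<eta> > 0\<close> by (simp add: field_simps)
      finally have p2: "integral {a+\<delta>'..e} (\<lambda>t. ?d n t * k t) \<le> \<eta>" .
      have nonneg: "0 \<le> integral {a..e} (\<lambda>t. ?d n t * k t)"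
        using k0 d0 ae by (intro integral_nonneg int) auto
      show "norm (integral {a..e} (\<lambda>t. ?d n t * k t) - 0) < r"
        using split p1 p2 nonneg \<open>\<eta> > 0\<close> by (simp add: \<eta>_def)
    qed
  qed
qed

lemma glue_main:
  fixes g g' h :: "real \<Rightarrow> 'a::banach" and r :: "real \<Rightarrow> real" and \<phi> :: "real \<Rightarrow> real"
  assumes a0: "0 < a" and ae: "a < e" and e\<tau>: "e < \<tau>"
    and wd: "weak_deriv a \<tau> g g'"
    and hc: "continuous_on {a..\<tau>} h" and ha: "h a = 0"
    and gh: "AE t in lborel. t \<in> {a<..<\<tau>} \<longrightarrow> g t = h t"
    and rm: "r \<in> borel_measurable lborel" and r0: "\<And>t. 0 \<le> r t"
    and rg: "AE t in lborel. t \<in> {a<..<\<tau>} \<longrightarrow> norm (g' t) = r t"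
    and ri: "set_integrable lborel {a..e} r"
    and sm: "smooth \<phi>" and supp: "\<And>t. e < t \<Longrightarrow> \<phi> t = 0"
  shows "\<exists>I. ((\<lambda>t. deriv \<phi> t *\<^sub>R h t) has_integral -I) {a..e} \<and> ((\<lambda>t. \<phi> t *\<^sub>R g' t) has_integral I) {a..e}"
proof -
  have "\<exists>n. inverse (real (Suc n)) < e - a" using ae by (intro reals_Archimedean) simp
  then obtain K0 where K0: "inverse (real (Suc K0)) < e - a" by blast
  define K where "K = Suc K0"
  have K: "0 < K" "1 / real K < e - a" using K0 by (auto simp: K_def divide_inverse)
  define ch where "ch n = cutoff a (n + K)" for n
  define \<psi> where "\<psi> n t = \<phi> t * ch n t" for n t
  have cle: "a + 1 / real (n + K) < e" for n
  proof -
    have "1 / real (n + K) \<le> 1 / real K" using K(1) by (intro divide_left_mono) auto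
    then show ?thesis using K(2) by linarith
  qed
  have cgt: "a < a + 1 / real (n + K)" for n using K(1) by simp
  have psi_sm: "smooth (\<psi> n)" for n
    unfolding \<psi>_def ch_def by (intro smooth_mult sm cutoff_smooth)
  have psi_out: "\<psi> n t = 0" if "t \<notin> {a + 1 / real (n + K)..e}" for n t
  proof (cases "t > e")
    case True then show ?thesis by (simp add: \<psi>_def supp)
  next
    case False
    then have "t \<le> a + 1 / real (n + K)" using that by auto
    then have "ch n t = 0" unfolding ch_def using K(1) by (intro cutoff_zero) auto
    then show ?thesis by (simp add: \<psi>_def)
  qed
  have psi_test: "test_fun a \<tau> (\<psi> n)" for n
    by (rule test_funI[OF psi_sm cgt less_imp_le[OF cle] e\<tau>]) (rule psi_out)
  have dpsi_out: "deriv (\<psi> n) t = 0" if "t \<notin> {a + 1 / real (n + K)..e}" for n t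
    by (rule deriv_zero_outside[OF psi_out that])
  have dphi: "(\<phi> has_real_derivative deriv \<phi> t) (at t)" for t
    using smoothD[OF sm, of 0] by (simp add: DERIV_deriv_iff_real_differentiable)
  have dchi: "(ch n has_real_derivative deriv (ch n) t) (at t)" for n t
    unfolding ch_def using smoothD[OF cutoff_smooth, of 0] by (simp add: DERIV_deriv_iff_real_differentiable)
  have dpsi: "deriv (\<psi> n) t = deriv \<phi> t * ch n t + deriv (ch n) t * \<phi> t" for n t
  proof -
    have "((\<lambda>t. \<phi> t * ch n t) has_real_derivative deriv \<phi> t * ch n t + deriv (ch n) t * \<phi> t) (at t)"
      by (rule DERIV_mult[OF dphi dchi])
    then show ?thesis unfolding \<psi>_def[abs_def] by (rule DERIV_imp_deriv)
  qed
  have "\<forall>n. \<exists>I. ((\<lambda>t. deriv (\<psi> n) t *\<^sub>R g t) has_integral - I) {a<..<\<tau>} \<and>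
        ((\<lambda>t. \<psi> n t *\<^sub>R g' t) has_integral I) {a<..<\<tau>}"
    using wd psi_test unfolding weak_deriv_def by blast
  from choice[OF this] obtain In where In0: "\<forall>n. ((\<lambda>t. deriv (\<psi> n) t *\<^sub>R g t) has_integral - In n) {a<..<\<tau>} \<and>
        ((\<lambda>t. \<psi> n t *\<^sub>R g' t) has_integral In n) {a<..<\<tau>}"
    by blast
  then have In: "\<And>n. ((\<lambda>t. deriv (\<psi> n) t *\<^sub>R g t) has_integral - In n) {a<..<\<tau>}"
    "\<And>n. ((\<lambda>t. \<psi> n t *\<^sub>R g' t) has_integral In n) {a<..<\<tau>}"
    by blast+
  have negA: "negligible {a}" by simp
  have P1: "((\<lambda>t. \<psi> n t *\<^sub>R g' t) has_integral In n) {a..e}" for n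
  proof -
    have "((\<lambda>t. \<psi> n t *\<^sub>R g' t) has_integral In n) {a<..<\<tau>} \<longleftrightarrow> ((\<lambda>t. \<psi> n t *\<^sub>R g' t) has_integral In n) {a..e}"
      by (rule has_integral_supp_neg[OF negA]) (use psi_out cle e\<tau> in \<open>auto\<close>)
    then show ?thesis using In(2) by blast
  qed
  obtain Nr where Nr: "negligible Nr" "\<And>x. x \<notin> Nr \<Longrightarrow> x \<in> {a<..<\<tau>} \<longrightarrow> norm (g' x) = r x"
    using AE_negligible[OF rg] by blast
  obtain M where M: "\<And>x. x \<in> {a..e} \<Longrightarrow> \<bar>\<phi> x\<bar> \<le> M" using smooth_bounded[OF sm] by blast
  define e1 where "e1 n x = \<bar>\<phi> x\<bar> * (1 - ch n x) * r x" for n x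
  have chi01: "0 \<le> ch n x" "ch n x \<le> 1" for n x unfolding ch_def using cutoff_01 by auto
  have chi_lim: "(\<lambda>n. ch n x) \<longlonglongrightarrow> 1" if "x > a" for x
    unfolding ch_def using that by (rule cutoff_lim)
  note rm[measurable] smooth_meas[OF sm, measurable]
  have chim[measurable]: "ch n \<in> borel_measurable lborel" for n
    unfolding ch_def by (rule smooth_meas[OF cutoff_smooth])
  have e1m: "e1 n \<in> borel_measurable lborel" for n unfolding e1_def by measurable
  have e1w: "set_integrable lborel {a..e} (\<lambda>x. \<bar>M\<bar> * r x)" by (intro set_integrable_mult_right ri)
  have e1le: "\<bar>e1 n x\<bar> \<le> \<bar>M\<bar> * r x" if "x \<in> {a..e}" for n x
  proof -
    have "\<bar>e1 n x\<bar> = \<bar>\<phi> x\<bar> * (1 - ch n x) * r x"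
      using chi01[of n x] r0[of x] by (simp add: e1_def abs_mult)
    also have "\<dots> \<le> \<bar>M\<bar> * 1 * r x"
      using chi01[of n x] r0[of x] M[OF that]
      by (intro mult_right_mono mult_mono) auto
    finally show ?thesis by simp
  qed
  have e1lim: "AE x in lborel. x \<in> {a..e} \<longrightarrow> (\<lambda>n. e1 n x) \<longlonglongrightarrow> 0"
    using AE_lborel_singleton[of a]
  proof eventually_elim
    case (elim x)
    show ?case
    proof
      assume "x \<in> {a..e}"
      then have "x > a" using elim by auto
      have "(\<lambda>n. \<bar>\<phi> x\<bar> * (1 - ch n x) * r x) \<longlonglongrightarrow> \<bar>\<phi> x\<bar> * (1 - 1) * r x"
        by (intro tendsto_intros chi_lim[OF \<open>x > a\<close>])
      then show "(\<lambda>n. e1 n x) \<longlonglongrightarrow> 0" by (simp add: e1_def)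
    qed
  qed
  note e1_dct = hk_dct_real[OF e1m e1w e1le e1lim]
  have P2le: "norm (\<phi> x *\<^sub>R g' x - \<psi> n x *\<^sub>R g' x) \<le> e1 n x" if "x \<in> {a..e}" "x \<notin> Nr \<union> {a}" for n x
  proof -
    have "x \<in> {a<..<\<tau>}" using that e\<tau> by auto
    then have ng: "norm (g' x) = r x" using Nr(2) that by blast
    have "\<phi> x *\<^sub>R g' x - \<psi> n x *\<^sub>R g' x = (\<phi> x * (1 - ch n x)) *\<^sub>R g' x"
      by (simp add: \<psi>_def algebra_simps)
    then have "norm (\<phi> x *\<^sub>R g' x - \<psi> n x *\<^sub>R g' x) = \<bar>\<phi> x\<bar> * (1 - ch n x) * r x"
      using chi01[of n x] ng by (simp add: abs_mult)
    then show ?thesis by (simp add: e1_def)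
  qed
  have P1i: "(\<lambda>t. \<psi> n t *\<^sub>R g' t) integrable_on {a..e}" for n using P1 by blast
  have negN: "negligible (Nr \<union> {a})" using Nr(1) by simp
  note P2 = hk_approx_AE[where f="\<lambda>t. \<phi> t *\<^sub>R g' t", OF P1i e1_dct(1) negN P2le e1_dct(2)]
  define I1 where "I1 = integral {a..e} (\<lambda>t. \<phi> t *\<^sub>R g' t)"
  have eqI: "integral {a..e} (\<lambda>t. \<psi> n t *\<^sub>R g' t) = In n" for n using P1[of n] by (rule integral_unique)
  have In_lim: "In \<longlonglongrightarrow> I1"
    using P2(2) unfolding I1_def eqI by simp
  have hsub: "continuous_on {a..e} h" by (rule continuous_on_subset[OF hc]) (use e\<tau> in auto)
  have dphic: "continuous_on S (deriv \<phi>)" for S by (rule smooth_cont[OF smooth_deriv[OF sm]])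
  have phic: "continuous_on S \<phi>" for S by (rule smooth_cont[OF sm])
  have chic: "continuous_on S (ch n)" for S n unfolding ch_def by (rule cont_cutoff)
  have dchic: "continuous_on S (deriv (ch n))" for S n unfolding ch_def by (rule cont_deriv_cutoff)
  have intA: "(\<lambda>t. (deriv \<phi> t * ch n t) *\<^sub>R h t) integrable_on {a..e}" for n
    by (intro integrable_continuous_interval continuous_intros dphic chic hsub)
  have intB: "(\<lambda>t. (deriv (ch n) t * \<phi> t) *\<^sub>R h t) integrable_on {a..e}" for n
    by (intro integrable_continuous_interval continuous_intros dchic phic hsub)
  have P3: "- In n = integral {a..e} (\<lambda>t. (deriv \<phi> t * ch n t) *\<^sub>R h t)
                   + integral {a..e} (\<lambda>t. (deriv (ch n) t * \<phi> t) *\<^sub>R h t)" for n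
  proof -
    have "((\<lambda>t. deriv (\<psi> n) t *\<^sub>R h t) has_integral - In n) {a<..<\<tau>}"
    proof -
      have ae: "AE t in lborel. t \<in> {a<..<\<tau>} \<longrightarrow> deriv (\<psi> n) t *\<^sub>R g t = deriv (\<psi> n) t *\<^sub>R h t"
        using gh by eventually_elim auto
      show ?thesis using In(1)[of n] has_integral_AE_cong[OF ae] by blast
    qed
    moreover have "((\<lambda>t. deriv (\<psi> n) t *\<^sub>R h t) has_integral - In n) {a<..<\<tau>} \<longleftrightarrow>
        ((\<lambda>t. deriv (\<psi> n) t *\<^sub>R h t) has_integral - In n) {a..e}"
      by (rule has_integral_supp_neg[OF negA]) (use dpsi_out cle e\<tau> in \<open>auto\<close>)
    ultimately have "((\<lambda>t. deriv (\<psi> n) t *\<^sub>R h t) has_integral - In n) {a..e}" by blast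
    then have "- In n = integral {a..e} (\<lambda>t. deriv (\<psi> n) t *\<^sub>R h t)" by (simp add: integral_unique)
    also have "\<dots> = integral {a..e} (\<lambda>t. (deriv \<phi> t * ch n t) *\<^sub>R h t + (deriv (ch n) t * \<phi> t) *\<^sub>R h t)"
      by (simp add: dpsi scaleR_add_left)
    also have "\<dots> = integral {a..e} (\<lambda>t. (deriv \<phi> t * ch n t) *\<^sub>R h t)
                   + integral {a..e} (\<lambda>t. (deriv (ch n) t * \<phi> t) *\<^sub>R h t)"
      by (rule integral_add[OF intA intB])
    finally show ?thesis .
  qed
  define h' where "h' t = h (max a (min \<tau> t))" for t
  have h'c: "continuous_on UNIV h'"
    unfolding h'_def using ae e\<tau>
    by (intro continuous_on_compose2[OF hc, of UNIV "\<lambda>t. max a (min \<tau> t)"] continuous_intros) auto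
  have h'eq: "h' t = h t" if "t \<in> {a..e}" for t using that e\<tau> by (auto simp: h'_def)
  have nh'm[measurable]: "(\<lambda>t. norm (h' t)) \<in> borel_measurable lborel"
  proof -
    have "continuous_on UNIV (\<lambda>t. norm (h' t))" using h'c by (intro continuous_intros)
    then show ?thesis using borel_measurable_continuous_onI by simp
  qed
  have dphim[measurable]: "deriv \<phi> \<in> borel_measurable lborel" by (rule smooth_meas[OF smooth_deriv[OF sm]])
  have KAc: "continuous_on {a..e} (\<lambda>t. \<bar>deriv \<phi> t\<bar> * norm (h' t))"
    by (intro continuous_intros dphic continuous_on_subset[OF h'c]) auto
  obtain KA where KA: "0 \<le> KA" "\<And>t. t \<in> {a..e} \<Longrightarrow> \<bar>\<bar>deriv \<phi> t\<bar> * norm (h' t)\<bar> \<le> KA"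
    using cont_bounded[OF KAc] by blast
  define eA where "eA n t = \<bar>deriv \<phi> t\<bar> * (1 - ch n t) * norm (h' t)" for n t
  have eAm: "eA n \<in> borel_measurable lborel" for n unfolding eA_def by measurable
  have eAw: "set_integrable lborel {a..e} (\<lambda>x. KA * 1)" by (intro set_integrable_mult_right si_const)
  have eAle: "\<bar>eA n x\<bar> \<le> KA * 1" if "x \<in> {a..e}" for n x
  proof -
    have "\<bar>eA n x\<bar> = (1 - ch n x) * (\<bar>deriv \<phi> x\<bar> * norm (h' x))"
      using chi01[of n x] by (simp add: eA_def abs_mult)
    also have "\<dots> \<le> 1 * KA"
      using chi01[of n x] KA(2)[OF that] by (intro mult_mono) auto
    finally show ?thesis by simp
  qed
  have eAlim: "AE x in lborel. x \<in> {a..e} \<longrightarrow> (\<lambda>n. eA n x) \<longlonglongrightarrow> 0"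
    using AE_lborel_singleton[of a]
  proof eventually_elim
    case (elim x)
    show ?case
    proof
      assume "x \<in> {a..e}"
      then have "x > a" using elim by auto
      have "(\<lambda>n. \<bar>deriv \<phi> x\<bar> * (1 - ch n x) * norm (h' x)) \<longlonglongrightarrow> \<bar>deriv \<phi> x\<bar> * (1 - 1) * norm (h' x)"
        by (intro tendsto_intros chi_lim[OF \<open>x > a\<close>])
      then show "(\<lambda>n. eA n x) \<longlonglongrightarrow> 0" by (simp add: eA_def)
    qed
  qed
  note eA_dct = hk_dct_real[OF eAm eAw eAle eAlim]
  have P4le: "norm (deriv \<phi> x *\<^sub>R h x - (deriv \<phi> x * ch n x) *\<^sub>R h x) \<le> eA n x" if "x \<in> {a..e}" for n x
  proof -
    have "deriv \<phi> x *\<^sub>R h x - (deriv \<phi> x * ch n x) *\<^sub>R h x = (deriv \<phi> x * (1 - ch n x)) *\<^sub>R h x"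
      by (simp add: algebra_simps)
    then show ?thesis using chi01[of n x] h'eq[OF that] by (simp add: eA_def abs_mult)
  qed
  note P4 = hk_approx[where f="\<lambda>t. deriv \<phi> t *\<^sub>R h t", OF intA eA_dct(1) P4le eA_dct(2)]
  have P5: "(\<lambda>n. integral {a..e} (\<lambda>t. (deriv (ch n) t * \<phi> t) *\<^sub>R h t)) \<longlonglongrightarrow> 0"
  proof (rule Lim_null_comparison)
    have kc: "continuous_on {a..e} (\<lambda>t. norm (\<phi> t *\<^sub>R h t))"
      by (intro continuous_intros phic hsub)
    show "(\<lambda>n. integral {a..e} (\<lambda>t. deriv (cutoff a (n + K)) t * norm (\<phi> t *\<^sub>R h t))) \<longlonglongrightarrow> 0"
      by (rule cutoff_small[OF kc]) (use ha ae in auto)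
    show "\<forall>\<^sub>F n in sequentially. norm (integral {a..e} (\<lambda>t. (deriv (ch n) t * \<phi> t) *\<^sub>R h t))
        \<le> integral {a..e} (\<lambda>t. deriv (cutoff a (n + K)) t * norm (\<phi> t *\<^sub>R h t))"
    proof (intro always_eventually allI)
      fix n
      show "norm (integral {a..e} (\<lambda>t. (deriv (ch n) t * \<phi> t) *\<^sub>R h t))
        \<le> integral {a..e} (\<lambda>t. deriv (cutoff a (n + K)) t * norm (\<phi> t *\<^sub>R h t))"
      proof (rule integral_norm_bound_integral[OF intB])
        show "(\<lambda>t. deriv (cutoff a (n + K)) t * norm (\<phi> t *\<^sub>R h t)) integrable_on {a..e}"
          by (intro integrable_continuous_interval continuous_intros cont_deriv_cutoff phic hsub)
        show "norm ((deriv (ch n) t * \<phi> t) *\<^sub>R h t) \<le> deriv (cutoff a (n + K)) t * norm (\<phi> t *\<^sub>R h t)" for t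
          using deriv_cutoff_nonneg[of a "n + K" t] by (simp add: ch_def abs_mult)
      qed
    qed
  qed
  define A where "A = integral {a..e} (\<lambda>t. deriv \<phi> t *\<^sub>R h t)"
  have "(\<lambda>n. - In n) \<longlonglongrightarrow> A + 0"
    unfolding P3 A_def by (intro tendsto_add P4(2) P5)
  moreover have "(\<lambda>n. - In n) \<longlonglongrightarrow> - I1" using In_lim by (rule tendsto_minus)
  ultimately have AI: "A = - I1" using LIMSEQ_unique by force
  show ?thesis
  proof (intro exI conjI)
    show "((\<lambda>t. deriv \<phi> t *\<^sub>R h t) has_integral - I1) {a..e}"
      using P4(1) AI unfolding A_def by (simp add: has_integral_integral)
    show "((\<lambda>t. \<phi> t *\<^sub>R g' t) has_integral I1) {a..e}"
      using P2(1) unfolding I1_def by (simp add: has_integral_integral)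
  qed
qed

lemma glue:
  fixes g g' h :: "real \<Rightarrow> 'a::banach" and r :: "real \<Rightarrow> real"
  assumes a0: "0 < a" and a\<tau>: "a < \<tau>"
    and wd: "weak_deriv a \<tau> g g'"
    and hc: "continuous_on {a..\<tau>} h" and ha: "h a = 0"
    and gh: "AE t in lborel. t \<in> {a<..<\<tau>} \<longrightarrow> g t = h t"
    and rm: "r \<in> borel_measurable lborel" and r0: "\<And>t. 0 \<le> r t"
    and rg: "AE t in lborel. t \<in> {a<..<\<tau>} \<longrightarrow> norm (g' t) = r t"
    and ri: "\<And>e. a < e \<Longrightarrow> e < \<tau> \<Longrightarrow> set_integrable lborel {a..e} r"
  shows "weak_deriv 0 \<tau> (\<lambda>t. if t \<le> a then 0 else g t) (\<lambda>t. if t \<le> a then 0 else g' t)"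
  unfolding weak_deriv_def
proof (intro allI impI)
  fix \<phi> assume \<phi>: "test_fun 0 \<tau> \<phi>"
  obtain c e where ce: "0 < c" "c \<le> e" "e < \<tau>" "\<And>t. t \<notin> {c..e} \<Longrightarrow> \<phi> t = 0"
    using test_fun_supp[OF \<phi>] by blast
  have sm: "smooth \<phi>" using \<phi> by (rule test_fun_smooth)
  have dz: "deriv \<phi> t = 0" if "t \<notin> {c..e}" for t by (rule deriv_zero_outside[OF ce(4) that])
  let ?G = "\<lambda>t. if t \<le> a then 0 else g t"
  let ?G' = "\<lambda>t. if t \<le> a then 0 else g' t"
  show "\<exists>I. ((\<lambda>t. deriv \<phi> t *\<^sub>R ?G t) has_integral - I) {0<..<\<tau>} \<and>
            ((\<lambda>t. \<phi> t *\<^sub>R ?G' t) has_integral I) {0<..<\<tau>}"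
  proof (cases "e \<le> a")
    case True
    have z1: "deriv \<phi> t *\<^sub>R ?G t = 0" for t
    proof (cases "t \<le> a")
      case False
      then have "t \<notin> {c..e}" using True by auto
      then show ?thesis using dz by simp
    qed simp
    have z2: "\<phi> t *\<^sub>R ?G' t = 0" for t
    proof (cases "t \<le> a")
      case False
      then have "t \<notin> {c..e}" using True by auto
      then show ?thesis using ce(4) by simp
    qed simp
    show ?thesis
      by (intro exI[of _ 0]) (simp add: z1 z2)
  next
    case False
    then have ae: "a < e" by simp
    obtain I where I: "((\<lambda>t. deriv \<phi> t *\<^sub>R h t) has_integral -I) {a..e}"
      "((\<lambda>t. \<phi> t *\<^sub>R g' t) has_integral I) {a..e}"
      using glue_main[OF a0 ae ce(3) wd hc ha gh rm r0 rg ri[OF ae ce(3)] sm] ce(4) by auto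
    have sub: "{a..e} \<subseteq> {0<..<\<tau>}" using a0 ce(3) by auto
    have ae1: "AE t in lborel. t \<in> {a..e} \<longrightarrow> deriv \<phi> t *\<^sub>R h t = deriv \<phi> t *\<^sub>R ?G t"
      using gh AE_lborel_singleton[of a]
    proof eventually_elim
      case (elim t)
      show ?case
      proof
        assume "t \<in> {a..e}"
        then have "t \<in> {a<..<\<tau>}" "\<not> t \<le> a" using elim ce(3) by auto
        then show "deriv \<phi> t *\<^sub>R h t = deriv \<phi> t *\<^sub>R ?G t" using elim by simp
      qed
    qed
    have i1: "((\<lambda>t. deriv \<phi> t *\<^sub>R ?G t) has_integral -I) {a..e}"
      using I(1) has_integral_AE_cong[OF ae1] by blast
    have i1': "((\<lambda>t. deriv \<phi> t *\<^sub>R ?G t) has_integral -I) {0<..<\<tau>}"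
    proof -
      have "((\<lambda>t. deriv \<phi> t *\<^sub>R ?G t) has_integral -I) {a..e} \<longleftrightarrow>
            ((\<lambda>t. deriv \<phi> t *\<^sub>R ?G t) has_integral -I) {0<..<\<tau>}"
      proof (rule has_integral_supp[OF sub])
        fix x assume x: "x \<in> {0<..<\<tau>} - {a..e}"
        show "deriv \<phi> x *\<^sub>R ?G x = 0"
        proof (cases "x \<le> a")
          case False
          then have "x \<notin> {c..e}" using x by auto
          then show ?thesis using dz by simp
        qed simp
      qed
      then show ?thesis using i1 by blast
    qed
    have i2: "((\<lambda>t. \<phi> t *\<^sub>R ?G' t) has_integral I) {a..e}"
    proof -
      have "((\<lambda>t. \<phi> t *\<^sub>R g' t) has_integral I) {a..e} \<longleftrightarrow> ((\<lambda>t. \<phi> t *\<^sub>R ?G' t) has_integral I) {a..e}"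
        by (rule has_integral_spike_eq[of "{a}"]) auto
      then show ?thesis using I(2) by blast
    qed
    have i2': "((\<lambda>t. \<phi> t *\<^sub>R ?G' t) has_integral I) {0<..<\<tau>}"
    proof -
      have "((\<lambda>t. \<phi> t *\<^sub>R ?G' t) has_integral I) {a..e} \<longleftrightarrow>
            ((\<lambda>t. \<phi> t *\<^sub>R ?G' t) has_integral I) {0<..<\<tau>}"
      proof (rule has_integral_supp[OF sub])
        fix x assume x: "x \<in> {0<..<\<tau>} - {a..e}"
        show "\<phi> x *\<^sub>R ?G' x = 0"
        proof (cases "x \<le> a")
          case False
          then have "x \<notin> {c..e}" using x by auto
          then show ?thesis using ce(4) by simp
        qed simp
      qed
      then show ?thesis using i2 by blast
    qed
    show ?thesis using i1' i2' by blast
  qed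
qed

lemma Lpw_norm_AE_cong:
  assumes "AE t in lborel. t \<in> {a<..<b} \<longrightarrow> f t = g t"
  shows "Lpw_norm a b \<kappa> p f = Lpw_norm a b \<kappa> p g"
proof -
  have "(\<integral>\<^sup>+ t \<in> {a<..<b}. ennreal (\<bar>t\<bar> powr \<kappa> * norm (f t) powr p) \<partial>lborel)
      = (\<integral>\<^sup>+ t \<in> {a<..<b}. ennreal (\<bar>t\<bar> powr \<kappa> * norm (g t) powr p) \<partial>lborel)"
    by (rule nn_integral_cong_AE) (use assms in \<open>eventually_elim, auto simp: indicator_def\<close>)
  then show ?thesis unfolding Lpw_norm_def by simp
qed

lemma W1pw_norm_eq:
  fixes g g' :: "real \<Rightarrow> 'a::banach"
  assumes "weak_deriv a b g g'" "Lpw a b \<kappa> p g'" "0 \<le> a" "1 \<le> p" "0 \<le> \<kappa>"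
  shows "W1pw_norm a b \<kappa> p g = (Lpw_norm a b \<kappa> p g powr p + Lpw_norm a b \<kappa> p g' powr p) powr (1 / p)"
proof -
  let ?s = "SOME g'. weak_deriv a b g g' \<and> Lpw a b \<kappa> p g'"
  have s: "weak_deriv a b g ?s \<and> Lpw a b \<kappa> p ?s" using assms(1,2) by (rule someI[where x=g', OF conjI])
  have "AE t in lborel. t \<in> {a<..<b} \<longrightarrow> ?s t = g' t"
    using wd_unique[OF conjunct1[OF s] assms(1) conjunct2[OF s] assms(2) assms(3-5)] .
  then have "Lpw_norm a b \<kappa> p ?s = Lpw_norm a b \<kappa> p g'" by (rule Lpw_norm_AE_cong)
  then show ?thesis unfolding W1pw_norm_def by simp
qed

lemma weak_deriv_restrict:
  fixes g g' :: "real \<Rightarrow> 'a::banach"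
  assumes "weak_deriv a0 b0 g g'" "a0 \<le> a" "b \<le> b0"
  shows "weak_deriv a b g g'"
  unfolding weak_deriv_def
proof (intro allI impI)
  fix \<phi> assume \<phi>: "test_fun a b \<phi>"
  obtain c d where cd: "a < c" "c \<le> d" "d < b" "\<And>t. t \<notin> {c..d} \<Longrightarrow> \<phi> t = 0"
    using test_fun_supp[OF \<phi>] by blast
  have "test_fun a0 b0 \<phi>" using \<phi> assms(2,3) unfolding test_fun_def by force
  then obtain I where I: "((\<lambda>t. deriv \<phi> t *\<^sub>R g t) has_integral - I) {a0<..<b0}"
      "((\<lambda>t. \<phi> t *\<^sub>R g' t) has_integral I) {a0<..<b0}"
    using assms(1) unfolding weak_deriv_def by blast
  have sub: "{a<..<b} \<subseteq> {a0<..<b0}" using assms(2,3) by auto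
  have dz: "deriv \<phi> t = 0" if "t \<notin> {c..d}" for t by (rule deriv_zero_outside[OF cd(4) that])
  have out: "t \<notin> {c..d}" if "t \<in> {a0<..<b0} - {a<..<b}" for t using that cd by auto
  have "((\<lambda>t. deriv \<phi> t *\<^sub>R g t) has_integral - I) {a<..<b} \<longleftrightarrow> ((\<lambda>t. deriv \<phi> t *\<^sub>R g t) has_integral - I) {a0<..<b0}"
  proof (rule has_integral_supp[OF sub])
    fix x assume "x \<in> {a0<..<b0} - {a<..<b}"
    then have "deriv \<phi> x = 0" by (intro dz out)
    then show "deriv \<phi> x *\<^sub>R g x = 0" by simp
  qed
  moreover have "((\<lambda>t. \<phi> t *\<^sub>R g' t) has_integral I) {a<..<b} \<longleftrightarrow> ((\<lambda>t. \<phi> t *\<^sub>R g' t) has_integral I) {a0<..<b0}"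
  proof (rule has_integral_supp[OF sub])
    fix x assume "x \<in> {a0<..<b0} - {a<..<b}"
    then have "\<phi> x = 0" by (intro cd(4) out)
    then show "\<phi> x *\<^sub>R g' x = 0" by simp
  qed
  ultimately have "((\<lambda>t. deriv \<phi> t *\<^sub>R g t) has_integral - I) {a<..<b}" "((\<lambda>t. \<phi> t *\<^sub>R g' t) has_integral I) {a<..<b}"
    using I by blast+
  then show "\<exists>I. ((\<lambda>t. deriv \<phi> t *\<^sub>R g t) has_integral - I) {a<..<b} \<and>
      ((\<lambda>t. \<phi> t *\<^sub>R g' t) has_integral I) {a<..<b}" by blast
qed

lemma weak_deriv_cong:
  fixes g g' :: "real \<Rightarrow> 'a::banach"
  assumes "weak_deriv a b g1 g1'" "\<And>t. t \<in> {a<..<b} \<Longrightarrow> g1 t = g2 t" "\<And>t. t \<in> {a<..<b} \<Longrightarrow> g1' t = g2' t"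
  shows "weak_deriv a b g2 g2'"
  unfolding weak_deriv_def
proof (intro allI impI)
  fix \<phi> assume \<phi>: "test_fun a b \<phi>"
  then obtain I where I: "((\<lambda>t. deriv \<phi> t *\<^sub>R g1 t) has_integral - I) {a<..<b}"
      "((\<lambda>t. \<phi> t *\<^sub>R g1' t) has_integral I) {a<..<b}"
    using assms(1) unfolding weak_deriv_def by blast
  have "((\<lambda>t. deriv \<phi> t *\<^sub>R g2 t) has_integral - I) {a<..<b}"
    by (rule has_integral_spike[OF negligible_empty _ I(1)]) (use assms(2) in auto)
  moreover have "((\<lambda>t. \<phi> t *\<^sub>R g2' t) has_integral I) {a<..<b}"
    by (rule has_integral_spike[OF negligible_empty _ I(2)]) (use assms(3) in auto)
  ultimately show "\<exists>I. ((\<lambda>t. deriv \<phi> t *\<^sub>R g2 t) has_integral - I) {a<..<b} \<and>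
      ((\<lambda>t. \<phi> t *\<^sub>R g2' t) has_integral I) {a<..<b}" by blast
qed

lemma weak_deriv_diff:
  fixes g1 g2 g1' g2' :: "real \<Rightarrow> 'a::banach"
  assumes "weak_deriv a b g1 g1'" "weak_deriv a b g2 g2'"
  shows "weak_deriv a b (\<lambda>t. g1 t - g2 t) (\<lambda>t. g1' t - g2' t)"
  unfolding weak_deriv_def
proof (intro allI impI)
  fix \<phi> assume \<phi>: "test_fun a b \<phi>"
  obtain I1 where I1: "((\<lambda>t. deriv \<phi> t *\<^sub>R g1 t) has_integral - I1) {a<..<b}"
      "((\<lambda>t. \<phi> t *\<^sub>R g1' t) has_integral I1) {a<..<b}"
    using assms(1) \<phi> unfolding weak_deriv_def by blast
  obtain I2 where I2: "((\<lambda>t. deriv \<phi> t *\<^sub>R g2 t) has_integral - I2) {a<..<b}"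
      "((\<lambda>t. \<phi> t *\<^sub>R g2' t) has_integral I2) {a<..<b}"
    using assms(2) \<phi> unfolding weak_deriv_def by blast
  have "((\<lambda>t. deriv \<phi> t *\<^sub>R (g1 t - g2 t)) has_integral - (I1 - I2)) {a<..<b}"
    using has_integral_diff[OF I1(1) I2(1)] by (simp add: scaleR_diff_right)
  moreover have "((\<lambda>t. \<phi> t *\<^sub>R (g1' t - g2' t)) has_integral (I1 - I2)) {a<..<b}"
    using has_integral_diff[OF I1(2) I2(2)] by (simp add: scaleR_diff_right)
  ultimately show "\<exists>I. ((\<lambda>t. deriv \<phi> t *\<^sub>R (g1 t - g2 t)) has_integral - I) {a<..<b} \<and>
      ((\<lambda>t. \<phi> t *\<^sub>R (g1' t - g2' t)) has_integral I) {a<..<b}" by blast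
qed

lemma cont_AE_zero:
  fixes h :: "real \<Rightarrow> 'a::real_normed_vector"
  assumes hc: "continuous_on {c..a} h" and ca: "c < a" and ae: "AE t in lborel. t \<in> {c<..<a} \<longrightarrow> h t = 0"
  shows "h a = 0"
proof (rule ccontr)
  assume ha: "h a \<noteq> 0"
  then have "norm (h a) > 0" by simp
  then obtain \<delta> where \<delta>: "\<delta> > 0" "\<And>t. t \<in> {c..a} \<Longrightarrow> dist t a < \<delta> \<Longrightarrow> dist (h t) (h a) < norm (h a)"
    using hc[unfolded continuous_on_iff] ca by (meson atLeastAtMost_iff order.refl less_imp_le)
  define x where "x = max c (a - \<delta>)"
  have xa: "x < a" using ca \<delta>(1) by (auto simp: x_def)
  obtain N where N: "N \<in> null_sets lborel" "\<And>t. t \<in> space lborel - N \<Longrightarrow> t \<in> {c<..<a} \<longrightarrow> h t = 0"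
    using AE_E3[OF ae] by blast
  have "{x<..<a} \<subseteq> N"
  proof
    fix t assume t: "t \<in> {x<..<a}"
    then have "t \<in> {c..a}" "dist t a < \<delta>" by (auto simp: x_def dist_real_def)
    then have "dist (h t) (h a) < norm (h a)" by (rule \<delta>(2))
    then have "h t \<noteq> 0" by auto
    moreover have "t \<in> {c<..<a}" using t by (auto simp: x_def)
    ultimately show "t \<in> N" using N(2)[of t] by auto
  qed
  then have "emeasure lborel {x<..<a} \<le> emeasure lborel N" by (intro emeasure_mono) (use N in auto)
  then show False using null_setsD1[OF N(1)] xa by simp
qed

lemma MR_restrict:
  assumes "MR J p \<kappa> a0 b0 u" "a0 \<le> a" "b \<le> b0"
  shows "MR J p \<kappa> a b u"
  using assms Lpw_mono[of a0 b0 \<kappa> p _ a b] weak_deriv_restrict[of a0 b0 _ _ a b]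
  unfolding MR_def W1pw_def by meson

lemma trace_sub:
  assumes "continuous_on {a0..b0} h" "AE t in lborel. t \<in> {a0<..<b0} \<longrightarrow> g t = h t" "a0 \<le> a" "b \<le> b0"
  shows "trace_left a b g (h a)"
  unfolding trace_left_def
proof (intro exI conjI)
  show "continuous_on {a..b} h" by (rule continuous_on_subset[OF assms(1)]) (use assms(3,4) in auto)
  show "AE t in lborel. t \<in> {a<..<b} \<longrightarrow> g t = h t" using assms(2) by eventually_elim (use assms(3,4) in auto)
qed simp

lemma ss_restrict:
  assumes "strong_solution J A a0 b0 f x0 u" "a0 \<le> a" "b \<le> b0"
    "trace_left a b (\<lambda>t. blinfun_apply J (u t)) y" "\<And>t. t \<in> {a<..<b} \<Longrightarrow> f' t = f t"
  shows "strong_solution J A a b f' y u"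
proof -
  obtain u' where u': "Lpw a0 b0 0 1 u'" "weak_deriv a0 b0 (\<lambda>t. blinfun_apply J (u t)) u'"
    "AE t in lborel. t \<in> {a0<..<b0} \<longrightarrow> u' t + blinfun_apply (A t) (u t) = f t"
    using assms(1) unfolding strong_solution_def by blast
  have 1: "Lpw a b 0 1 u'" by (rule Lpw_mono[OF u'(1) assms(2,3)])
  have 2: "weak_deriv a b (\<lambda>t. blinfun_apply J (u t)) u'" by (rule weak_deriv_restrict[OF u'(2) assms(2,3)])
  have 3: "AE t in lborel. t \<in> {a<..<b} \<longrightarrow> u' t + blinfun_apply (A t) (u t) = f' t"
    using u'(3) by eventually_elim (use assms(2,3,5) in auto)
  have L: "Lpw a b 0 1 u" "Lpw a b 0 1 (\<lambda>t. blinfun_apply J (u t))" "Lpw a b 0 1 (\<lambda>t. blinfun_apply (A t) (u t))"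
    using assms(1) Lpw_mono[OF _ assms(2,3)] unfolding strong_solution_def by blast+
  show ?thesis unfolding strong_solution_def using L 1 2 3 assms(4) by blast
qed

lemma MR_diff:
  assumes "MR J p \<kappa> a b u" "MR J p \<kappa> a b v" "0 < p"
  shows "MR J p \<kappa> a b (\<lambda>t. u t - v t)"
proof -
  obtain g1 where g1: "weak_deriv a b (\<lambda>t. blinfun_apply J (u t)) g1" "Lpw a b \<kappa> p g1"
    using assms(1) unfolding MR_def W1pw_def by blast
  obtain g2 where g2: "weak_deriv a b (\<lambda>t. blinfun_apply J (v t)) g2" "Lpw a b \<kappa> p g2"
    using assms(2) unfolding MR_def W1pw_def by blast
  have eq: "(\<lambda>t. blinfun_apply J (u t - v t)) = (\<lambda>t. blinfun_apply J (u t) - blinfun_apply J (v t))"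
    by (simp add: blinfun.diff_right)
  have "Lpw a b \<kappa> p (\<lambda>t. u t - v t)"
    using assms unfolding MR_def by (intro Lpw_diff) auto
  moreover have "Lpw a b \<kappa> p (\<lambda>t. blinfun_apply J (u t - v t))"
    unfolding eq using assms unfolding MR_def W1pw_def by (intro Lpw_diff) auto
  moreover have "weak_deriv a b (\<lambda>t. blinfun_apply J (u t - v t)) (\<lambda>t. g1 t - g2 t)"
    unfolding eq by (rule weak_deriv_diff[OF g1(1) g2(1)])
  moreover have "Lpw a b \<kappa> p (\<lambda>t. g1 t - g2 t)" by (rule Lpw_diff[OF g1(2) g2(2) assms(3)])
  ultimately show ?thesis unfolding MR_def W1pw_def by blast
qed

lemma ss_diff:
  assumes "strong_solution J A a b f 0 u" "strong_solution J A a b f 0 v"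
  shows "strong_solution J A a b (\<lambda>t. 0) 0 (\<lambda>t. u t - v t)"
proof -
  obtain u1 where u1: "Lpw a b 0 1 u1" "weak_deriv a b (\<lambda>t. blinfun_apply J (u t)) u1"
    "AE t in lborel. t \<in> {a<..<b} \<longrightarrow> u1 t + blinfun_apply (A t) (u t) = f t"
    using assms(1) unfolding strong_solution_def by blast
  obtain u2 where u2: "Lpw a b 0 1 u2" "weak_deriv a b (\<lambda>t. blinfun_apply J (v t)) u2"
    "AE t in lborel. t \<in> {a<..<b} \<longrightarrow> u2 t + blinfun_apply (A t) (v t) = f t"
    using assms(2) unfolding strong_solution_def by blast
  obtain h1 where h1: "continuous_on {a..b} h1" "h1 a = 0" "AE t in lborel. t \<in> {a<..<b} \<longrightarrow> blinfun_apply J (u t) = h1 t"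
    using assms(1) unfolding strong_solution_def trace_left_def by blast
  obtain h2 where h2: "continuous_on {a..b} h2" "h2 a = 0" "AE t in lborel. t \<in> {a<..<b} \<longrightarrow> blinfun_apply J (v t) = h2 t"
    using assms(2) unfolding strong_solution_def trace_left_def by blast
  have eqJ: "(\<lambda>t. blinfun_apply J (u t - v t)) = (\<lambda>t. blinfun_apply J (u t) - blinfun_apply J (v t))"
    by (simp add: blinfun.diff_right)
  have eqA: "(\<lambda>t. blinfun_apply (A t) (u t - v t)) = (\<lambda>t. blinfun_apply (A t) (u t) - blinfun_apply (A t) (v t))"
    by (simp add: blinfun.diff_right)
  have L1: "Lpw a b 0 1 (\<lambda>t. u t - v t)"
    using assms unfolding strong_solution_def by (intro Lpw_diff) auto
  have L2: "Lpw a b 0 1 (\<lambda>t. blinfun_apply J (u t - v t))"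
    unfolding eqJ using assms unfolding strong_solution_def by (intro Lpw_diff) auto
  have L3: "Lpw a b 0 1 (\<lambda>t. blinfun_apply (A t) (u t - v t))"
    unfolding eqA using assms unfolding strong_solution_def by (intro Lpw_diff) auto
  have D: "\<exists>u'. Lpw a b 0 1 u' \<and> weak_deriv a b (\<lambda>t. blinfun_apply J (u t - v t)) u' \<and>
      (AE t in lborel. t \<in> {a<..<b} \<longrightarrow> u' t + blinfun_apply (A t) (u t - v t) = 0)"
  proof (intro exI conjI)
    show "Lpw a b 0 1 (\<lambda>t. u1 t - u2 t)" by (rule Lpw_diff[OF u1(1) u2(1)]) simp
    show "weak_deriv a b (\<lambda>t. blinfun_apply J (u t - v t)) (\<lambda>t. u1 t - u2 t)"
      unfolding eqJ by (rule weak_deriv_diff[OF u1(2) u2(2)])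
    show "AE t in lborel. t \<in> {a<..<b} \<longrightarrow> u1 t - u2 t + blinfun_apply (A t) (u t - v t) = 0"
      using u1(3) u2(3) by eventually_elim (auto simp: blinfun.diff_right algebra_simps)
  qed
  have T: "trace_left a b (\<lambda>t. blinfun_apply J (u t - v t)) 0"
    unfolding trace_left_def
  proof (intro exI conjI)
    show "continuous_on {a..b} (\<lambda>t. h1 t - h2 t)" using h1(1) h2(1) by (intro continuous_intros)
    show "h1 a - h2 a = 0" using h1(2) h2(2) by simp
    show "AE t in lborel. t \<in> {a<..<b} \<longrightarrow> blinfun_apply J (u t - v t) = h1 t - h2 t"
      using h1(3) h2(3) by eventually_elim (auto simp: blinfun.diff_right)
  qed
  show ?thesis unfolding strong_solution_def using L1 L2 L3 D T by blast
qed

lemma Lpw_ext0: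
  assumes "Lpw a \<tau> \<kappa> p f" "0 < p" "0 \<le> a"
  shows "Lpw 0 \<tau> \<kappa> p (\<lambda>t. if t \<le> a then 0 else f t)"
    "Lpw_norm 0 \<tau> \<kappa> p (\<lambda>t. if t \<le> a then 0 else f t) = Lpw_norm a \<tau> \<kappa> p f"
proof -
  have eq: "(if t \<in> {a<..<\<tau>} then f t else 0) = (if t \<le> a then 0 else f t)" if "t \<in> {0<..<\<tau>}" for t
    using that by auto
  show "Lpw 0 \<tau> \<kappa> p (\<lambda>t. if t \<le> a then 0 else f t)"
    using Lpw_ext[OF assms(1,2), of 0 \<tau>]
      Lpw_cong(1)[where a=0 and b=\<tau> and f="\<lambda>t. if t \<in> {a<..<\<tau>} then f t else 0" and g="\<lambda>t. if t \<le> a then 0 else f t", OF eq]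
    by blast
  show "Lpw_norm 0 \<tau> \<kappa> p (\<lambda>t. if t \<le> a then 0 else f t) = Lpw_norm a \<tau> \<kappa> p f"
    using Lpw_ext_norm[OF assms(2) assms(3), of \<tau> \<tau> \<kappa> f]
      Lpw_cong(2)[where a=0 and b=\<tau> and f="\<lambda>t. if t \<in> {a<..<\<tau>} then f t else 0" and g="\<lambda>t. if t \<le> a then 0 else f t", OF eq]
    by simp
qed

lemma si_closed:
  fixes r :: "real \<Rightarrow> real"
  assumes "set_integrable lborel {a<..e} r" "r \<in> borel_measurable lborel"
  shows "set_integrable lborel {a..e} r"
proof -
  note assms(2)[measurable]
  have "integrable lborel (\<lambda>x. indicator {a<..e} x *\<^sub>R r x) \<longleftrightarrow> integrable lborel (\<lambda>x. indicator {a..e} x *\<^sub>R r x)"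
    by (rule integrable_cong_AE) (use AE_lborel_singleton[of a] in \<open>auto elim!: AE_mp simp: indicator_def\<close>)
  then show ?thesis using assms(1) unfolding set_integrable_def by blast
qed

lemma wd_ext:
  fixes g g' h :: "real \<Rightarrow> 'a::banach"
  assumes wd: "weak_deriv a \<tau> g g'" and L: "Lpw a \<tau> \<kappa> p g'" and p1: "1 \<le> p" and k0: "0 \<le> \<kappa>"
    and a0: "0 \<le> a" and a\<tau>: "a < \<tau>"
    and hc: "continuous_on {a..\<tau>} h" and ha: "h a = 0"
    and gh: "AE t in lborel. t \<in> {a<..<\<tau>} \<longrightarrow> g t = h t"
  shows "weak_deriv 0 \<tau> (\<lambda>t. if t \<le> a then 0 else g t) (\<lambda>t. if t \<le> a then 0 else g' t)"
proof (cases "a = 0")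
  case True
  have wd0: "weak_deriv 0 \<tau> g g'" using wd True by simp
  show ?thesis by (rule weak_deriv_cong[OF wd0]) (use True in auto)
next
  case False
  then have apos: "0 < a" using a0 by simp
  obtain r where r: "r \<in> borel_measurable lborel" "\<And>t. 0 \<le> r t"
    "AE t in lborel. t \<in> {a<..<\<tau>} \<longrightarrow> norm (g' t) = r t"
    "\<And>s t. 0 < s \<Longrightarrow> set_integrable lborel ({a<..<\<tau>} \<inter> {s..t}) r"
    using Lpw_locint[OF L p1 k0] by blast
  have ri: "set_integrable lborel {a..e} r" if "a < e" "e < \<tau>" for e
  proof -
    have "{a<..<\<tau>} \<inter> {a..e} = {a<..e}" using that by auto
    then have "set_integrable lborel {a<..e} r" using r(4)[OF apos, of e] by simp
    then show ?thesis using r(1) by (rule si_closed)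
  qed
  show ?thesis by (rule glue[OF apos a\<tau> wd hc ha gh r(1,2,3) ri])
qed

lemma MR_ext:
  assumes v: "MR J p \<kappa> a \<tau> v" and a0: "0 \<le> a" and a\<tau>: "a < \<tau>" and p1: "1 \<le> p" and k0: "0 \<le> \<kappa>"
    and hc: "continuous_on {a..\<tau>} h" and ha: "h a = 0"
    and gh: "AE t in lborel. t \<in> {a<..<\<tau>} \<longrightarrow> blinfun_apply J (v t) = h t"
  shows "MR J p \<kappa> 0 \<tau> (\<lambda>t. if t \<le> a then 0 else v t)"
    "MR_norm J p \<kappa> 0 \<tau> (\<lambda>t. if t \<le> a then 0 else v t) = MR_norm J p \<kappa> a \<tau> v"
proof -
  obtain g' where g': "weak_deriv a \<tau> (\<lambda>t. blinfun_apply J (v t)) g'" "Lpw a \<tau> \<kappa> p g'"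
    using v unfolding MR_def W1pw_def by blast
  have p0: "0 < p" using p1 by simp
  have eqJ: "(\<lambda>t. blinfun_apply J (if t \<le> a then 0 else v t)) = (\<lambda>t. if t \<le> a then 0 else blinfun_apply J (v t))"
    by (auto simp: blinfun.zero_right)
  have Lv: "Lpw a \<tau> \<kappa> p v" and LJ: "Lpw a \<tau> \<kappa> p (\<lambda>t. blinfun_apply J (v t))"
    using v unfolding MR_def W1pw_def by blast+
  note ev = Lpw_ext0[OF Lv p0 a0]
  note eJ = Lpw_ext0[OF LJ p0 a0]
  note eg = Lpw_ext0[OF g'(2) p0 a0]
  have wd: "weak_deriv 0 \<tau> (\<lambda>t. if t \<le> a then 0 else blinfun_apply J (v t)) (\<lambda>t. if t \<le> a then 0 else g' t)"
    by (rule wd_ext[OF g'(1) g'(2) p1 k0 a0 a\<tau> hc ha gh])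
  show "MR J p \<kappa> 0 \<tau> (\<lambda>t. if t \<le> a then 0 else v t)"
    unfolding MR_def W1pw_def eqJ using ev(1) eJ(1) eg(1) wd by blast
  have "W1pw_norm 0 \<tau> \<kappa> p (\<lambda>t. if t \<le> a then 0 else blinfun_apply J (v t))
      = (Lpw_norm 0 \<tau> \<kappa> p (\<lambda>t. if t \<le> a then 0 else blinfun_apply J (v t)) powr p
         + Lpw_norm 0 \<tau> \<kappa> p (\<lambda>t. if t \<le> a then 0 else g' t) powr p) powr (1 / p)"
    by (rule W1pw_norm_eq[OF wd eg(1) order.refl p1 k0])
  also have "\<dots> = W1pw_norm a \<tau> \<kappa> p (\<lambda>t. blinfun_apply J (v t))"
    using W1pw_norm_eq[OF g'(1) g'(2) a0 p1 k0] eJ(2) eg(2) by simp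
  finally show "MR_norm J p \<kappa> 0 \<tau> (\<lambda>t. if t \<le> a then 0 else v t) = MR_norm J p \<kappa> a \<tau> v"
    unfolding MR_norm_def eqJ ev(2) by simp
qed

lemma ss_ext:
  assumes ss: "strong_solution J A a \<tau> f 0 v" and a0: "0 \<le> a" and a\<tau>: "a < \<tau>"
    and f1: "\<And>t. 0 < t \<Longrightarrow> t \<le> a \<Longrightarrow> f' t = 0" and f2: "\<And>t. a < t \<Longrightarrow> t < \<tau> \<Longrightarrow> f' t = f t"
  shows "strong_solution J A 0 \<tau> f' 0 (\<lambda>t. if t \<le> a then 0 else v t)"
proof -
  obtain u' where u': "Lpw a \<tau> 0 1 u'" "weak_deriv a \<tau> (\<lambda>t. blinfun_apply J (v t)) u'"
    "AE t in lborel. t \<in> {a<..<\<tau>} \<longrightarrow> u' t + blinfun_apply (A t) (v t) = f t"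
    using ss unfolding strong_solution_def by blast
  obtain h where h: "continuous_on {a..\<tau>} h" "h a = 0" "AE t in lborel. t \<in> {a<..<\<tau>} \<longrightarrow> blinfun_apply J (v t) = h t"
    using ss unfolding strong_solution_def trace_left_def by blast
  have eqJ: "(\<lambda>t. blinfun_apply J (if t \<le> a then 0 else v t)) = (\<lambda>t. if t \<le> a then 0 else blinfun_apply J (v t))"
    by (auto simp: blinfun.zero_right)
  have eqA: "(\<lambda>t. blinfun_apply (A t) (if t \<le> a then 0 else v t)) = (\<lambda>t. if t \<le> a then 0 else blinfun_apply (A t) (v t))"
    by (auto simp: blinfun.zero_right)
  have Ls: "Lpw a \<tau> 0 1 v" "Lpw a \<tau> 0 1 (\<lambda>t. blinfun_apply J (v t))" "Lpw a \<tau> 0 1 (\<lambda>t. blinfun_apply (A t) (v t))"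
    using ss unfolding strong_solution_def by blast+
  have L1: "Lpw 0 \<tau> 0 1 (\<lambda>t. if t \<le> a then 0 else v t)" by (rule Lpw_ext0(1)[OF Ls(1) _ a0]) simp
  have L2: "Lpw 0 \<tau> 0 1 (\<lambda>t. blinfun_apply J (if t \<le> a then 0 else v t))"
    unfolding eqJ by (rule Lpw_ext0(1)[OF Ls(2) _ a0]) simp
  have L3: "Lpw 0 \<tau> 0 1 (\<lambda>t. blinfun_apply (A t) (if t \<le> a then 0 else v t))"
    unfolding eqA by (rule Lpw_ext0(1)[OF Ls(3) _ a0]) simp
  have D: "\<exists>w. Lpw 0 \<tau> 0 1 w \<and> weak_deriv 0 \<tau> (\<lambda>t. blinfun_apply J (if t \<le> a then 0 else v t)) w \<and>
      (AE t in lborel. t \<in> {0<..<\<tau>} \<longrightarrow> w t + blinfun_apply (A t) (if t \<le> a then 0 else v t) = f' t)"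
  proof (intro exI conjI)
    show "Lpw 0 \<tau> 0 1 (\<lambda>t. if t \<le> a then 0 else u' t)" by (rule Lpw_ext0(1)[OF u'(1) _ a0]) simp
    show "weak_deriv 0 \<tau> (\<lambda>t. blinfun_apply J (if t \<le> a then 0 else v t)) (\<lambda>t. if t \<le> a then 0 else u' t)"
      unfolding eqJ by (rule wd_ext[OF u'(2) u'(1) _ _ a0 a\<tau> h(1,2,3)]) auto
    show "AE t in lborel. t \<in> {0<..<\<tau>} \<longrightarrow> (if t \<le> a then 0 else u' t) + blinfun_apply (A t) (if t \<le> a then 0 else v t) = f' t"
      using u'(3)
    proof eventually_elim
      case (elim t)
      show ?case
      proof
        assume t: "t \<in> {0<..<\<tau>}"
        show "(if t \<le> a then 0 else u' t) + blinfun_apply (A t) (if t \<le> a then 0 else v t) = f' t"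
        proof (cases "t \<le> a")
          case True then show ?thesis using f1 t by (simp add: blinfun.zero_right)
        next
          case False then show ?thesis using elim t f2 by auto
        qed
      qed
    qed
  qed
  have T: "trace_left 0 \<tau> (\<lambda>t. blinfun_apply J (if t \<le> a then 0 else v t)) 0"
    unfolding trace_left_def
  proof (intro exI conjI)
    let ?h = "\<lambda>t. if t \<le> a then 0 else h t"
    have c1: "continuous_on {0..a} ?h"
      by (rule continuous_on_cong[THEN iffD2, OF refl _ continuous_on_const[of _ 0]]) auto
    have c2: "continuous_on {a..\<tau>} ?h"
      by (rule continuous_on_cong[THEN iffD2, OF refl _ h(1)]) (use h(2) in auto)
    have "continuous_on ({0..a} \<union> {a..\<tau>}) ?h" by (rule continuous_on_closed_Un[OF _ _ c1 c2]) auto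
    moreover have "{0..a} \<union> {a..\<tau>} = {0..\<tau>}" using a0 a\<tau> by auto
    ultimately show "continuous_on {0..\<tau>} ?h" by simp
    show "?h 0 = 0" using a0 by simp
    show "AE t in lborel. t \<in> {0<..<\<tau>} \<longrightarrow> blinfun_apply J (if t \<le> a then 0 else v t) = ?h t"
      using h(3) by eventually_elim (auto simp: blinfun.zero_right)
  qed
  show ?thesis unfolding strong_solution_def using L1 L2 L3 D T by blast
qed

lemma key:
  assumes M: "M \<in> MR_consts J A p \<kappa> 0 T" and a0: "0 \<le> a" and ab: "a < b" and bT: "b \<le> T"
    and p1: "1 < p" and k0: "0 \<le> \<kappa>"
    and f: "Lpw a b \<kappa> p f" and \<tau>: "\<tau> \<in> {a<..b}"
    and v: "MR J p \<kappa> a \<tau> v" "strong_solution J A a \<tau> f 0 v"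
  shows "MR_norm J p \<kappa> a \<tau> v \<le> M * Lpw_norm a \<tau> \<kappa> p f"
proof -
  define f' where "f' t = (if t \<in> {a<..<b} then f t else 0)" for t
  have p0: "0 < p" using p1 by simp
  have Lf: "Lpw 0 T \<kappa> p f'" unfolding f'_def by (rule Lpw_ext[OF f p0])
  obtain h where h: "continuous_on {a..\<tau>} h" "h a = 0" "AE t in lborel. t \<in> {a<..<\<tau>} \<longrightarrow> blinfun_apply J (v t) = h t"
    using v(2) unfolding strong_solution_def trace_left_def by blast
  have a\<tau>: "a < \<tau>" "\<tau> \<le> b" using \<tau> by auto
  note E = MR_ext[OF v(1) a0 a\<tau>(1) _ k0 h] 
  have MRe: "MR J p \<kappa> 0 \<tau> (\<lambda>t. if t \<le> a then 0 else v t)" using E p1 by simp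
  have MRn: "MR_norm J p \<kappa> 0 \<tau> (\<lambda>t. if t \<le> a then 0 else v t) = MR_norm J p \<kappa> a \<tau> v" using E p1 by simp
  have SSe: "strong_solution J A 0 \<tau> f' 0 (\<lambda>t. if t \<le> a then 0 else v t)"
    by (rule ss_ext[OF v(2) a0 a\<tau>(1)]) (use a\<tau> in \<open>auto simp: f'_def\<close>)
  have \<tau>0: "\<tau> \<in> {0<..T}" using a0 a\<tau> bT by auto
  have "MR_norm J p \<kappa> 0 \<tau> (\<lambda>t. if t \<le> a then 0 else v t) \<le> M * Lpw_norm 0 \<tau> \<kappa> p f'"
    using M Lf \<tau>0 MRe SSe unfolding MR_consts_def by blast
  moreover have "Lpw_norm 0 \<tau> \<kappa> p f' = Lpw_norm a \<tau> \<kappa> p f"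
  proof -
    have "Lpw_norm 0 \<tau> \<kappa> p f' = Lpw_norm 0 \<tau> \<kappa> p (\<lambda>t. if t \<in> {a<..<\<tau>} then f t else 0)"
      by (rule Lpw_cong(2)) (use a\<tau> in \<open>auto simp: f'_def\<close>)
    also have "\<dots> = Lpw_norm a \<tau> \<kappa> p f" by (rule Lpw_ext_norm[OF p0 a0 order.refl])
    finally show ?thesis .
  qed
  ultimately show ?thesis using MRn by simp
qed

lemma M_in:
  assumes ne: "MR_consts J A p \<kappa> a b \<noteq> {}"
  shows "M_const J A p \<kappa> a b \<in> MR_consts J A p \<kappa> a b"
proof -
  let ?S = "MR_consts J A p \<kappa> a b"
  have S0: "\<And>C. C \<in> ?S \<Longrightarrow> 0 \<le> C" unfolding MR_consts_def by blast
  have I0: "0 \<le> Inf ?S" using ne S0 by (intro cInf_greatest) auto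
  have "MR_norm J p \<kappa> a \<tau> v \<le> Inf ?S * Lpw_norm a \<tau> \<kappa> p f"
    if H: "Lpw a b \<kappa> p f" "\<tau> \<in> {a<..b}" "MR J p \<kappa> a \<tau> v" "strong_solution J A a \<tau> f 0 v" for f \<tau> v
  proof -
    let ?m = "MR_norm J p \<kappa> a \<tau> v" and ?L = "Lpw_norm a \<tau> \<kappa> p f"
    have all: "?m \<le> C * ?L" if "C \<in> ?S" for C using that H unfolding MR_consts_def by blast
    show ?thesis
    proof (cases "?L = 0")
      case True
      obtain C where "C \<in> ?S" using ne by blast
      then show ?thesis using all True by force
    next
      case False
      then have Lpos: "?L > 0" using Lpw_norm_nonneg[of a \<tau> \<kappa> p f] by linarith
      have "?m / ?L \<le> Inf ?S"
        using ne by (intro cInf_greatest) (use all Lpos in \<open>auto simp: divide_le_eq\<close>)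
      then show ?thesis using Lpos by (simp add: divide_le_eq)
    qed
  qed
  then show ?thesis using I0 unfolding M_const_def by (subst (2) MR_consts_def) blast
qed

theorem lemma2p2:
  fixes J :: "'x1::banach \<Rightarrow>\<^sub>L 'x0::banach"
    and A :: "real \<Rightarrow> ('x1 \<Rightarrow>\<^sub>L 'x0)"
    and T p \<kappa> a b :: real
    and f :: "real \<Rightarrow> 'x0"
  assumes "0 < T"
    and "inj (blinfun_apply J)"
    and "closure (range (blinfun_apply J)) = UNIV"
    and "\<forall>x. strongly_measurable_on {0..T} (\<lambda>t. blinfun_apply (A t) x)"
    and "1 < p" and "0 \<le> \<kappa>" and "\<kappa> < p - 1"
    and "max_reg J A p \<kappa> 0 T"
    and "0 \<le> a" and "a < b" and "b \<le> T"
    and "Lpw a b \<kappa> p f"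
  shows "(\<exists>u. MR J p \<kappa> a b u \<and> strong_solution J A a b f 0 u \<and>
              MR_norm J p \<kappa> a b u \<le> M_const J A p \<kappa> 0 T * Lpw_norm a b \<kappa> p f) \<and>
         (\<forall>u v. MR J p \<kappa> a b u \<and> strong_solution J A a b f 0 u \<and>
                MR J p \<kappa> a b v \<and> strong_solution J A a b f 0 v \<longrightarrow>
                (AE t in lborel. t \<in> {a<..<b} \<longrightarrow> u t = v t)) \<and>
         max_reg J A p \<kappa> a b \<and>
         M_const J A p \<kappa> a b \<le> M_const J A p \<kappa> 0 T"
proof -
  let ?M = "M_const J A p \<kappa> 0 T"
  note a0 = assms(9) and ab = assms(10) and bT = assms(11) and f = assms(12)
  have p1: "1 < p" and k0: "0 \<le> \<kappa>" using assms by auto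
  have p0: "0 < p" using p1 by simp
  have mr: "\<And>f. Lpw 0 T \<kappa> p f \<Longrightarrow> (\<exists>u. MR J p \<kappa> 0 T u \<and> strong_solution J A 0 T f 0 u)"
    "MR_consts J A p \<kappa> 0 T \<noteq> {}"
    using assms(8) unfolding max_reg_def by blast+
  have hM: "?M \<in> MR_consts J A p \<kappa> 0 T" by (rule M_in[OF mr(2)])
  have M0: "0 \<le> ?M" using hM unfolding MR_consts_def by blast
  have exist: "\<exists>u. MR J p \<kappa> a b u \<and> strong_solution J A a b f 0 u \<and>
      MR_norm J p \<kappa> a b u \<le> ?M * Lpw_norm a b \<kappa> p f" if f: "Lpw a b \<kappa> p f" for f
  proof -
    define f' where "f' t = (if t \<in> {a<..<b} then f t else 0)" for t
    have Lf: "Lpw 0 T \<kappa> p f'" unfolding f'_def by (rule Lpw_ext[OF f p0])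
    obtain U where U: "MR J p \<kappa> 0 T U" "strong_solution J A 0 T f' 0 U" using mr(1)[OF Lf] by blast
    obtain h where h: "continuous_on {0..T} h" "h 0 = 0"
      "AE t in lborel. t \<in> {0<..<T} \<longrightarrow> blinfun_apply J (U t) = h t"
      using U(2) unfolding strong_solution_def trace_left_def by blast
    have aT: "a \<le> T" using ab bT by simp
    have ha: "h a = 0"
    proof (cases "a = 0")
      case True then show ?thesis using h(2) by simp
    next
      case False
      then have apos: "0 < a" using a0 by simp
      have MRa: "MR J p \<kappa> 0 a U" by (rule MR_restrict[OF U(1) order.refl aT])
      have tr: "trace_left 0 a (\<lambda>t. blinfun_apply J (U t)) 0"
        using trace_sub[OF h(1) h(3) order.refl aT] h(2) by simp
      have SSa: "strong_solution J A 0 a f' 0 U"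
        by (rule ss_restrict[OF U(2) order.refl aT tr]) simp
      have "a \<in> {0<..T}" using apos aT by simp
      then have le: "MR_norm J p \<kappa> 0 a U \<le> ?M * Lpw_norm 0 a \<kappa> p f'"
        using hM Lf MRa SSa unfolding MR_consts_def by blast
      have "Lpw_norm 0 a \<kappa> p f' = Lpw_norm 0 a \<kappa> p (\<lambda>t. 0::'x0)"
        by (intro Lpw_norm_AE_cong AE_I2) (auto simp: f'_def)
      also have "\<dots> = 0" by (rule Lpw_zero(2)[OF p0])
      finally have "MR_norm J p \<kappa> 0 a U \<le> 0" using le by simp
      then have "Lpw_norm 0 a \<kappa> p U \<le> 0" unfolding MR_norm_def by simp
      then have "AE t in lborel. t \<in> {0<..<a} \<longrightarrow> U t = 0"
        using MRa unfolding MR_def by (intro Lpw_norm_zero[OF _ order.refl p0]) auto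
      then have "AE t in lborel. t \<in> {0<..<a} \<longrightarrow> h t = 0"
        using h(3) by eventually_elim (use aT in \<open>auto simp: blinfun.zero_right\<close>)
      moreover have "continuous_on {0..a} h" by (rule continuous_on_subset[OF h(1)]) (use aT in auto)
      ultimately show ?thesis using cont_AE_zero apos by blast
    qed
    have MRab: "MR J p \<kappa> a b U" by (rule MR_restrict[OF U(1) a0 bT])
    have trab: "trace_left a b (\<lambda>t. blinfun_apply J (U t)) 0"
      using trace_sub[OF h(1) h(3) a0 bT] ha by simp
    have SSab: "strong_solution J A a b f 0 U"
      by (rule ss_restrict[OF U(2) a0 bT trab]) (simp add: f'_def)
    have "MR_norm J p \<kappa> a b U \<le> ?M * Lpw_norm a b \<kappa> p f"
      by (rule key[OF hM a0 ab bT p1 k0 f _ MRab SSab]) (use ab in simp)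
    then show ?thesis using MRab SSab by blast
  qed
  have uniq: "AE t in lborel. t \<in> {a<..<b} \<longrightarrow> u t = v t"
    if H: "MR J p \<kappa> a b u \<and> strong_solution J A a b g 0 u \<and> MR J p \<kappa> a b v \<and> strong_solution J A a b g 0 v" for g u v
  proof -
    have MRw: "MR J p \<kappa> a b (\<lambda>t. u t - v t)" using H by (intro MR_diff[OF _ _ p0]) auto
    have SSw: "strong_solution J A a b (\<lambda>t. 0) 0 (\<lambda>t. u t - v t)" using H by (intro ss_diff) auto
    have "MR_norm J p \<kappa> a b (\<lambda>t. u t - v t) \<le> ?M * Lpw_norm a b \<kappa> p (\<lambda>t. 0::'x0)"
      by (rule key[OF hM a0 ab bT p1 k0 Lpw_zero(1)[OF p0] _ MRw SSw]) (use ab in simp)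
    moreover have "Lpw_norm a b \<kappa> p (\<lambda>t. 0::'x0) = 0" by (rule Lpw_zero(2)[OF p0])
    ultimately have "MR_norm J p \<kappa> a b (\<lambda>t. u t - v t) \<le> 0" by simp
    then have "Lpw_norm a b \<kappa> p (\<lambda>t. u t - v t) \<le> 0" unfolding MR_norm_def by simp
    then have "AE t in lborel. t \<in> {a<..<b} \<longrightarrow> u t - v t = 0"
      using MRw unfolding MR_def by (intro Lpw_norm_zero[OF _ a0 p0]) auto
    then show ?thesis by eventually_elim auto
  qed
  have inS: "?M \<in> MR_consts J A p \<kappa> a b"
    unfolding MR_consts_def
  proof (intro CollectI conjI allI impI)
    show "0 \<le> ?M" by (rule M0)
    fix g :: "real \<Rightarrow> 'x0" and \<tau> v assume "Lpw a b \<kappa> p g" "\<tau> \<in> {a<..b}" "MR J p \<kappa> a \<tau> v" "strong_solution J A a \<tau> g 0 v"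
    then show "MR_norm J p \<kappa> a \<tau> v \<le> ?M * Lpw_norm a \<tau> \<kappa> p g"
      by (intro key[OF hM a0 ab bT p1 k0]) auto
  qed
  have mrab: "max_reg J A p \<kappa> a b"
    unfolding max_reg_def
  proof (intro conjI allI impI)
    fix g :: "real \<Rightarrow> 'x0" assume "Lpw a b \<kappa> p g"
    then show "\<exists>u. MR J p \<kappa> a b u \<and> strong_solution J A a b g 0 u" using exist by blast
  next
    fix g :: "real \<Rightarrow> 'x0" and u v
    assume "MR J p \<kappa> a b u \<and> strong_solution J A a b g 0 u \<and> MR J p \<kappa> a b v \<and> strong_solution J A a b g 0 v"
    then show "AE t in lborel. t \<in> {a<..<b} \<longrightarrow> u t = v t" by (rule uniq)
  next
    show "MR_consts J A p \<kappa> a b \<noteq> {}" using inS by blast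
  qed
  have Mle: "M_const J A p \<kappa> a b \<le> ?M"
  proof -
    have "bdd_below (MR_consts J A p \<kappa> a b)"
      unfolding bdd_below_def MR_consts_def by blast
    then show ?thesis unfolding M_const_def[of J A p \<kappa> a b] by (rule cInf_lower[OF inS])
  qed
  show ?thesis using exist[OF f] uniq mrab Mle by blast
qed

end
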